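(* For $n\geq 6$, every eigenvalue of second-largest modulus of the Perron–Frobenius operator $\tilde P_n$ of $\tilde T_n$ (acting on $BV([0,1])$) has modulus at most $(1+n^{-1})(2+2\kappa_n)^{-1}$, and $(1+n^{-1})(2+2\kappa_n)^{-1}$ is asymptotically equivalent to $\tfrac12(1+n^{-1})$, in the sense that $(1+n^{-1})(2+2\kappa_n)^{-1}=\tfrac12\left(1+\tfrac1n+o(\tfrac1n)\right)$ as $n\to\infty$.
   Context: For $\kappa\in(0,1/2)$, the paired tent map $T_\kappa:[-1,1]\to[-1,1]$ is $T_\kappa(x)=2(1+\kappa)(x+1)-1$ for $x\in[-1,-1/2]$, $T_\kappa(x)=-2(1+\kappa)x-1$ for $x\in[-1/2,0)$, $T_\kappa(0)=0$, $T_\kappa(x)=-2(1+\kappa)x+1$ for $x\in(0,1/2]$, $T_\kappa(x)=2(1+\kappa)(x-1)+1$ for $x\in[1/2,1]$. For $n\geq1$, $\kappa_n$ is the unique solution in $(0,1/2)$ of $(2+2\kappa)^n\kappa=1$, and $\tilde T_n=|T_{\kappa_n}|$ restricted to $[0,1]$, a map $[0,1]\to[0,1]$. Its Perron–Frobenius operator $\tilde P_n$ is defined on $L^1$ of normalized Lebesgue measure $\lambda$ on $[0,1]$ by letting $\tilde P_nf$ be the Radon–Nikodym derivative of $A\mapsto\int_{\tilde T_n^{-1}(A)}f\,d\lambda$; it is considered on the space $BV([0,1])$ of functions of bounded variation. *)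

theory Defs
  imports "HOL-Analysis.Analysis" "HOL-Library.Landau_Symbols"
begin

definition paired_tent :: "real \<Rightarrow> real \<Rightarrow> real" where
  "paired_tent \<kappa> x =
     (if x \<le> -1/2 then 2 * (1 + \<kappa>) * (x + 1) - 1
      else if x < 0 then - 2 * (1 + \<kappa>) * x - 1
      else if x = 0 then 0
      else if x \<le> 1/2 then - 2 * (1 + \<kappa>) * x + 1
      else 2 * (1 + \<kappa>) * (x - 1) + 1)"

definition kappa :: "nat \<Rightarrow> real" where
  "kappa n = (THE \<kappa>. 0 < \<kappa> \<and> \<kappa> < 1/2 \<and> (2 + 2 * \<kappa>) ^ n * \<kappa> = 1)"

definition Ttilde :: "nat \<Rightarrow> real \<Rightarrow> real" where
  "Ttilde n x = \<bar>paired_tent (kappa n) x\<bar>"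

definition bv01 :: "(real \<Rightarrow> complex) \<Rightarrow> bool" where
  "bv01 f \<longleftrightarrow> (\<exists>B. \<forall>(m::nat) (x::nat \<Rightarrow> real).
      0 \<le> x 0 \<and> x m \<le> 1 \<and> (\<forall>i<m. x i \<le> x (Suc i)) \<longrightarrow>
      (\<Sum>i<m. cmod (f (x (Suc i)) - f (x i))) \<le> B)"

text \<open>g is (a version of) the Perron--Frobenius image of f under T on [0,1] with respect to
  Lebesgue measure on [0,1]: g is the Radon--Nikodym derivative of
  A \<mapsto> integral of f over T^{-1}(A), i.e. the integral of g over A equals the integral of f
  over T^{-1}(A) for every Borel A in [0,1].\<close>
definition PF_image :: "(real \<Rightarrow> real) \<Rightarrow> (real \<Rightarrow> complex) \<Rightarrow> (real \<Rightarrow> complex) \<Rightarrow> bool" where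
  "PF_image T f g \<longleftrightarrow> integrable (lebesgue_on {0..1}) g \<and>
     (\<forall>A \<in> sets borel. A \<subseteq> {0..1} \<longrightarrow>
        integral\<^sup>L (lebesgue_on A) g = integral\<^sup>L (lebesgue_on {x \<in> {0..1}. T x \<in> A}) f)"

definition PF_eigenvalues :: "(real \<Rightarrow> real) \<Rightarrow> complex set" where
  "PF_eigenvalues T = {c. \<exists>f. bv01 f \<and> \<not> (AE x in lebesgue_on {0..1}. f x = 0) \<and>
                              PF_image T f (\<lambda>x. c * f x)}"

definition second_largest_eigenvalue :: "complex set \<Rightarrow> complex \<Rightarrow> bool" where
  "second_largest_eigenvalue E c \<longleftrightarrow>
     (let r = Sup (cmod ` E) in
       c \<in> E \<and> cmod c < r \<and> (\<forall>\<mu>\<in>E. cmod \<mu> < r \<longrightarrow> cmod \<mu> \<le> cmod c))"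

end

theory Submission
  imports Defs "HOL-Real_Asymp.Real_Asymp"
begin


lemma phi_strict_mono:
  fixes a b :: real assumes "0 \<le> a" "a < b" "n \<ge> 1"
  shows "(2 + 2*a)^n * a < (2 + 2*b)^n * b"
proof -
  have "(2 + 2*a)^n \<le> (2 + 2*b)^n" using assms by (intro power_mono) auto
  hence 1: "(2 + 2*a)^n * a \<le> (2 + 2*b)^n * a" using assms by (intro mult_right_mono) auto
  have "(2 + 2*b)^n > 0" using assms by simp
  hence 2: "(2 + 2*b)^n * a < (2 + 2*b)^n * b" using assms by (intro mult_strict_left_mono) auto
  from 1 2 show ?thesis by linarith
qed

lemma kappa_props:
  assumes "n \<ge> 1"
  shows "0 < kappa n \<and> kappa n < 1/2 \<and> (2 + 2 * kappa n) ^ n * kappa n = 1"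
proof -
  let ?phi = "\<lambda>k::real. (2 + 2*k)^n * k"
  have c: "continuous_on {0..1/2} ?phi" by (intro continuous_intros)
  have "(3::real)^n \<ge> 3^1" using assms by (intro power_increasing) auto
  hence p2: "?phi (1/2) > 1" by simp
  obtain x where x: "0 \<le> x" "x \<le> 1/2" "?phi x = 1"
    using IVT'[of ?phi 0 1 "1/2", OF _ _ _ c] p2 by auto
  have x0: "x \<noteq> 0" using x by auto
  have x1: "x \<noteq> 1/2"
  proof
    assume "x = 1/2" with x(3) p2 show False by simp
  qed
  have ex: "0 < x \<and> x < 1/2 \<and> ?phi x = 1" using x x0 x1 by auto
  have uniq: "y = x" if "0 < y \<and> y < 1/2 \<and> ?phi y = 1" for y
  proof (rule ccontr)
    assume "y \<noteq> x"
    then consider "y < x" | "x < y" by linarith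
    thus False
    proof cases
      case 1
      have "?phi y < ?phi x" by (rule phi_strict_mono) (use 1 that assms in auto)
      then show ?thesis using that ex by simp
    next
      case 2
      have "?phi x < ?phi y" by (rule phi_strict_mono) (use 2 ex assms in auto)
      then show ?thesis using that ex by simp
    qed
  qed
  have "kappa n = x" unfolding kappa_def
  proof (rule the_equality)
    show "0 < x \<and> x < 1/2 \<and> (2 + 2 * x) ^ n * x = 1" using ex by simp
  next
    fix y :: real assume "0 < y \<and> y < 1/2 \<and> (2 + 2 * y) ^ n * y = 1"
    then show "y = x" by (rule uniq)
  qed
  thus ?thesis using ex by simp
qed

lemma kappa_le: assumes "n \<ge> 1" shows "kappa n \<le> 1 / 2^n"
proof -
  have k: "0 < kappa n" "(2 + 2 * kappa n) ^ n * kappa n = 1" using kappa_props[OF assms] by auto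
  have "(2::real)^n \<le> (2 + 2 * kappa n) ^ n" using k by (intro power_mono) auto
  hence "2^n * kappa n \<le> 1" using k mult_right_mono[of "2^n" "(2 + 2 * kappa n) ^ n" "kappa n"] by linarith
  thus ?thesis by (simp add: field_simps)
qed


lemma asymp_part:
  "(\<lambda>n. (1 + 1 / real n) / (2 + 2 * kappa n) - (1/2) * (1 + 1 / real n)) \<in> o(\<lambda>n. 1 / real n)"
proof -
  have "(\<lambda>n. (1 + 1 / real n) / (2 + 2 * kappa n) - (1/2) * (1 + 1 / real n)) \<in> O(\<lambda>n. (1/2::real)^n)"
  proof (rule bigoI[where c=1])
    show "\<forall>\<^sub>F n in at_top. norm ((1 + 1 / real n) / (2 + 2 * kappa n) - (1/2) * (1 + 1 / real n)) \<le> 1 * norm ((1/2::real)^n)"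
      using eventually_ge_at_top[of "1::nat"]
    proof eventually_elim
      case (elim n)
      have k: "0 < kappa n" "kappa n \<le> 1/2^n" using kappa_props[OF elim] kappa_le[OF elim] by auto
      have e: "(1 + 1 / real n) / (2 + 2 * kappa n) - (1/2) * (1 + 1 / real n) = - ((1 + 1 / real n) * kappa n / (2 + 2 * kappa n))"
        using k by (simp add: field_simps)
      have r: "1 + 1 / real n \<le> 2" using elim by (simp add: field_simps)
      have "(1 + 1 / real n) * kappa n / (2 + 2 * kappa n) \<le> 2 * kappa n / 2"
        using k r by (intro frac_le mult_right_mono) auto
      moreover have "(1 + 1 / real n) * kappa n / (2 + 2 * kappa n) \<ge> 0" using k by simp
      ultimately show ?case unfolding e using k by (simp add: power_divide)
    qed
  qed
  moreover have "(\<lambda>n. (1/2::real)^n) \<in> o(\<lambda>n. 1 / real n)" by real_asymp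
  ultimately show ?thesis by (rule landau_o.big_small_trans)
qed


lemma binom_lower:
  fixes x :: real assumes "x \<ge> 0"
  shows "(1 + x)^n \<ge> 1 + real n * x + (real n * (real n - 1) / 2) * x^2"
proof (induction n)
  case 0 then show ?case by simp
next
  case (Suc n)
  have "(1 + x)^(Suc n) = (1+x) * (1+x)^n" by simp
  also have "\<dots> \<ge> (1+x) * (1 + real n * x + (real n * (real n - 1) / 2) * x^2)"
    using Suc.IH assms by (intro mult_left_mono) auto
  finally have a: "(1 + x)^(Suc n) \<ge> (1+x) * (1 + real n * x + (real n * (real n - 1) / 2) * x^2)" .
  have "(1+x) * (1 + real n * x + (real n * (real n - 1) / 2) * x^2) \<ge> 1 + real (Suc n) * x + (real (Suc n) * (real (Suc n) - 1) / 2) * x^2"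
  proof -
    have "(1+x) * (1 + real n * x + (real n * (real n - 1) / 2) * x^2) - (1 + real (Suc n) * x + (real (Suc n) * (real (Suc n) - 1) / 2) * x^2)
       = (real n * (real n - 1) / 2) * x^3" 
      by (simp add: field_simps power2_eq_square power3_eq_cube)
    moreover have "(real n * (real n - 1) / 2) * x^3 \<ge> 0" using assms
      by (cases n) auto
    ultimately show ?thesis by linarith
  qed
  with a show ?case by linarith
qed

lemma r_bound:
  assumes "n \<ge> 6"
  shows "(1 + 1 / real n)^n * (2 - (1 + 1/real n)) \<ge> 2"
proof -
  have nr: "real n \<ge> 6" using assms by simp
  have b: "(1 + 1/real n)^n \<ge> 2 + (real n - 1) / (2 * real n)"
  proof -
    have "(1 + 1/real n)^n \<ge> 1 + real n * (1/real n) + (real n * (real n - 1) / 2) * (1/real n)^2"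
      using binom_lower[of "1/real n" n] assms by simp
    also have "1 + real n * (1/real n) + (real n * (real n - 1) / 2) * (1/real n)^2 = 2 + (real n - 1) / (2 * real n)"
      using nr by (simp add: field_simps power2_eq_square)
    finally show ?thesis .
  qed
  have "(2 + (real n - 1) / (2 * real n)) * (1 - 1/real n) \<ge> 2"
  proof -
    have "(2 + (real n - 1) / (2 * real n)) * (1 - 1/real n) = (5 * real n - 1) * (real n - 1) / (2 * real n ^ 2)"
      using nr by (simp add: field_simps power2_eq_square)
    moreover have "(5 * real n - 1) * (real n - 1) \<ge> 2 * (2 * real n ^ 2)"
    proof -
      have h1: "real n * real n \<ge> 6 * real n" using nr by (intro mult_right_mono) auto
      have h2: "(5 * real n - 1) * (real n - 1) - 2 * (2 * real n ^ 2) = real n * real n - 6 * real n + 1"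
        by (simp add: algebra_simps power2_eq_square)
      show ?thesis using h1 h2 by linarith
    qed
    moreover have pos: "2 * real n ^ 2 > 0" using nr by simp
    ultimately show ?thesis by (simp add: pos_le_divide_eq)
  qed
  moreover have "(1 + 1/real n)^n * (1 - 1/real n) \<ge> (2 + (real n - 1) / (2 * real n)) * (1 - 1/real n)"
    using b nr by (intro mult_right_mono) auto
  ultimately show ?thesis by simp
qed


lemma geo_part:
  fixes r :: real assumes n: "n \<ge> 6" and rdef: "r = 1 + 1 / real n"
  shows "(\<Sum>i<n. (1/2::real)^(n - Suc i) * (1/r)^(Suc i)) \<le> 1"
proof -
  have r1: "r > 1" using n rdef by simp
  have r2: "r < 2" using n rdef by simp
  have "(\<Sum>i<n. (1/2::real)^(n - Suc i) * (1/r)^(Suc i)) = (\<Sum>i<n. (1/2)^i * (1/r)^(n - i))"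
    by (rule sum.reindex_bij_witness[where i="\<lambda>i. n - Suc i" and j="\<lambda>i. n - Suc i"]) (auto simp: Suc_diff_Suc)
  also have "\<dots> = (\<Sum>i<n. (1/r)^n * (r/2)^i)"
  proof (rule sum.cong)
    fix i assume "i \<in> {..<n}"
    hence "n = (n - i) + i" by simp
    hence "(1/r)^n = (1/r)^(n-i) * (1/r)^i" by (metis power_add)
    thus "(1/2::real)^i * (1/r)^(n - i) = (1/r)^n * (r/2)^i" using r1
      by (simp add: power_divide)
  qed simp
  also have "\<dots> = (1/r)^n * (\<Sum>i<n. (r/2)^i)" by (simp add: sum_distrib_left)
  also have "(\<Sum>i<n. (r/2)^i) = (1 - (r/2)^n) / (1 - r/2)"
    using sum_gp_strict[of "r/2" n] r2 by auto
  also have "(1/r)^n * ((1 - (r/2)^n) / (1 - r/2)) \<le> (1/r)^n * (1 / (1 - r/2))"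
  proof -
    have "(1 - (r/2)^n) / (1 - r/2) \<le> 1 / (1 - r/2)" using r2 r1 by (intro divide_right_mono) auto
    thus ?thesis using r1 by (intro mult_left_mono) auto
  qed
  also have "(1/r)^n * (1 / (1 - r/2)) = 2 / (r^n * (2 - r))" using r1 r2
    by (simp add: power_divide divide_simps)
  also have "\<dots> \<le> 1"
  proof -
    have "r^n * (2 - r) \<ge> 2" using r_bound[OF n] by (simp add: rdef)
    thus ?thesis by simp
  qed
  finally show ?thesis .
qed


lemma term_bound:
  fixes s \<rho> r :: real assumes s: "s > 2" and r1: "r > 0" and \<rho>r: "\<rho> \<ge> r" and i: "i < n"
  shows "2 * (\<rho> ^ (n - Suc i) * s ^ i) / (\<rho>^n * s^n) < (1/2)^(n - Suc i) * (1/r)^(Suc i)"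
proof -
  have nn: "n = (n - Suc i) + Suc i" using i by simp
  have sp: "s^n = s^(n - Suc i) * s^(Suc i)" by (subst nn, subst power_add) (rule refl)
  have \<rho>p: "\<rho>^n = \<rho>^(n - Suc i) * \<rho>^(Suc i)" by (subst nn, subst power_add) (rule refl)
  have \<rho>0: "\<rho> > 0" using \<rho>r r1 by simp
  have "2 * (\<rho> ^ (n - Suc i) * s ^ i) / (\<rho>^n * s^n) = (2 * \<rho> ^ (n - Suc i) * s ^ i) / (\<rho>^(n - Suc i) * \<rho>^(Suc i) * (s^(n - Suc i) * s^(Suc i)))"
    unfolding sp \<rho>p by simp
  also have "\<dots> = (2 / s) * (1 / (s^(n - Suc i) * \<rho>^(Suc i)))"
    using s \<rho>0 by (simp add: divide_simps)
  also have "\<dots> = (2 / s) * ((1/s)^(n - Suc i) * (1/\<rho>)^(Suc i))"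
    by (simp add: power_divide)
  also have "\<dots> < 1 * ((1/2)^(n - Suc i) * (1/r)^(Suc i))"
  proof -
    have a: "2 / s < 1" using s by simp
    have "(1/s)^(n - Suc i) \<le> (1/2)^(n - Suc i)" using s by (intro power_mono) (auto simp: divide_simps)
    moreover have "(1/\<rho>)^(Suc i) \<le> (1/r)^(Suc i)" using \<rho>r r1 by (intro power_mono) (auto simp: divide_simps)
    ultimately have b: "(1/s)^(n - Suc i) * (1/\<rho>)^(Suc i) \<le> (1/2)^(n - Suc i) * (1/r)^(Suc i)"
      using s \<rho>0 by (intro mult_mono) auto
    have c: "0 < (1/s)^(n - Suc i) * (1/\<rho>)^(Suc i)" using s \<rho>0 by simp
    show ?thesis by (rule mult_less_le_imp_less[OF a b]) (use c s in auto)
  qed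
  finally show ?thesis by simp
qed


lemma root_lemma:
  fixes z :: complex and s :: real
  assumes n: "n \<ge> 6" and s: "s > 2" and ps: "s^n * (s - 2) = 2"
    and pz: "z^n * (z - 2) = 2" and zr: "cmod z > 1 + 1 / real n"
  shows "z = complex_of_real s"
proof (rule ccontr)
  assume ne: "z \<noteq> complex_of_real s"
  define S where "S = complex_of_real s"
  define r where "r = 1 + 1 / real n"
  define \<rho> where "\<rho> = cmod z"
  have r1: "r > 1" using n by (simp add: r_def)
  have \<rho>r: "\<rho> > r" using zr by (simp add: \<rho>_def r_def)
  have z0: "z \<noteq> 0" using \<rho>r r1 \<rho>_def by auto
  have S0: "S \<noteq> 0" using s S_def by auto
  have ez: "z - 2 = 2 / z^n" using pz z0 by (simp add: field_simps)
  have psS: "S^n * (S - 2) = 2" unfolding S_def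
    by (metis ps of_real_numeral of_real_mult of_real_power of_real_diff)
  have eS: "S - 2 = 2 / S^n" using psS S0 by (simp add: field_simps)
  have "z - S = (z - 2) - (S - 2)" by simp
  also have "\<dots> = 2 / z^n - 2 / S^n" by (simp only: ez eS)
  also have "\<dots> = 2 * (S^n - z^n) / (z^n * S^n)" using z0 S0 by (simp add: field_simps)
  also have "S^n - z^n = (S - z) * (\<Sum>i<n. z ^ (n - Suc i) * S ^ i)" by (rule power_diff_sumr2)
  finally have eq: "z - S = 2 * ((S - z) * (\<Sum>i<n. z ^ (n - Suc i) * S ^ i)) / (z^n * S^n)" .
  have zS: "z - S \<noteq> 0" using ne S_def by simp
  have gen: "(z - S) * (- 2 * Q / D) = 2 * ((S - z) * Q) / D" for Q D :: complex
    by (cases "D = 0") (simp_all add: field_simps)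
  have "(z - S) * 1 = (z - S) * (- 2 * (\<Sum>i<n. z ^ (n - Suc i) * S ^ i) / (z^n * S^n))"
    unfolding gen using eq by simp
  hence one: "1 = - 2 * (\<Sum>i<n. z ^ (n - Suc i) * S ^ i) / (z^n * S^n)"
    using zS mult_left_cancel by blast
  have "1 = cmod (- 2 * (\<Sum>i<n. z ^ (n - Suc i) * S ^ i) / (z^n * S^n))" 
    using one by (metis norm_one)
  also have "\<dots> = 2 * cmod (\<Sum>i<n. z ^ (n - Suc i) * S ^ i) / (\<rho>^n * s^n)"
    using s by (simp add: norm_divide norm_mult norm_power \<rho>_def S_def)
  also have "\<dots> \<le> 2 * (\<Sum>i<n. \<rho> ^ (n - Suc i) * s ^ i) / (\<rho>^n * s^n)"
  proof -
    have "cmod (\<Sum>i<n. z ^ (n - Suc i) * S ^ i) \<le> (\<Sum>i<n. cmod (z ^ (n - Suc i) * S ^ i))" by (rule norm_sum)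
    also have "\<dots> = (\<Sum>i<n. \<rho> ^ (n - Suc i) * s ^ i)" using s
      by (simp add: norm_mult norm_power \<rho>_def S_def)
    finally show ?thesis using s \<rho>r r1 by (intro divide_right_mono) auto
  qed
  also have "\<dots> = (\<Sum>i<n. 2 * (\<rho> ^ (n - Suc i) * s ^ i) / (\<rho>^n * s^n))"
    by (simp add: sum_distrib_left sum_divide_distrib)
  also have "\<dots> < (\<Sum>i<n. (1/2)^(n - Suc i) * (1/r)^(Suc i))"
  proof (rule sum_strict_mono)
    show "finite {..<n}" by simp
    have "0 \<in> {..<n}" using n by simp
    thus "{..<n} \<noteq> {}" by blast
    fix i assume i: "i \<in> {..<n}"
    show "2 * (\<rho> ^ (n - Suc i) * s ^ i) / (\<rho>^n * s^n) < (1/2)^(n - Suc i) * (1/r)^(Suc i)"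
      by (rule term_bound) (use s r1 \<rho>r i in auto)
  qed
  also have "\<dots> \<le> 1" by (rule geo_part[OF n r_def])
  finally show False by simp
qed


definition flat :: "(real \<times> real) list \<Rightarrow> real list" where
  "flat L = concat (map (\<lambda>(a,b). [a,b]) L)"

definition pairsum :: "(real \<Rightarrow> complex) \<Rightarrow> (real \<times> real) list \<Rightarrow> real" where
  "pairsum h L = sum_list (map (\<lambda>(a,b). cmod (h b - h a)) L)"

lemma flat_simps[simp]: "flat [] = []" "flat ((a,b) # L) = a # b # flat L" "flat (L1 @ L2) = flat L1 @ flat L2"
  by (auto simp: flat_def)

lemma pairsum_simps[simp]: "pairsum h [] = 0" "pairsum h ((a,b) # L) = cmod (h b - h a) + pairsum h L"
  "pairsum h (L1 @ L2) = pairsum h L1 + pairsum h L2" "pairsum h (rev L) = pairsum h L"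
  by (auto simp: pairsum_def rev_map[symmetric])

lemma flat_map_mono: "flat (map (\<lambda>(a,b). (f a, f b)) L) = map f (flat L)"
  by (induction L) auto

lemma flat_rev_map: "flat (rev (map (\<lambda>(a,b). (g b, g a)) L)) = rev (map g (flat L))"
  by (induction L) auto

lemma set_flat_filter: "set (flat (filter P L)) \<subseteq> set (flat L)"
  by (induction L) auto

lemma sorted_flat_filter: "sorted (flat L) \<Longrightarrow> sorted (flat (filter P L))"
proof (induction L)
  case Nil then show ?case by simp
next
  case (Cons p L)
  obtain a b where p: "p = (a,b)" by fastforce
  have s: "sorted (a # b # flat L)" using Cons.prems p by simp
  hence sL: "sorted (flat L)" by simp
  have IH: "sorted (flat (filter P L))" using Cons.IH sL by simp
  show ?case
  proof (cases "P p")
    case True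
    have "sorted (a # b # flat (filter P L))"
      using s IH set_flat_filter[of P L] by auto
    then show ?thesis using True p by simp
  next
    case False then show ?thesis using IH by simp
  qed
qed

lemma set_flat: "x \<in> set (flat L) \<longleftrightarrow> (\<exists>(a,b)\<in>set L. x = a \<or> x = b)"
  by (induction L) auto

lemma pairsum_filter: "pairsum h (filter P L) = sum_list (map (\<lambda>p. if P p then (case p of (a,b) \<Rightarrow> cmod (h b - h a)) else 0) L)"
  by (induction L) (auto simp: pairsum_def)

lemma pairsum_map: "pairsum h (map f L) = sum_list (map (\<lambda>p. case f p of (a,b) \<Rightarrow> cmod (h b - h a)) L)"
  by (induction L) (auto simp: pairsum_def split: prod.splits)


lemma pow_split: "j \<le> n \<Longrightarrow> (x::real)^n = x^(n-j) * x^j"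
  by (metis le_add_diff_inverse2 power_add)

definition Mset :: "real \<Rightarrow> real \<Rightarrow> nat \<Rightarrow> real set" where
  "Mset s k n = insert (1/(2 * s)) (insert (1/s) {k * s^j | j. j \<le> n - 2})"

definition cell :: "real \<Rightarrow> real \<Rightarrow> nat \<Rightarrow> real \<Rightarrow> real \<Rightarrow> bool" where
  "cell s k n a b \<longleftrightarrow> 0 < a \<and> a \<le> b \<and> b < 1/2 \<and> (\<forall>m\<in>Mset s k n. m < a \<or> b < m)"

context
  fixes s k :: real and n :: nat
  assumes n6: "n \<ge> 6" and k0: "0 < k" and k2: "k < 1/2" and sdef: "s = 2 + 2*k" and sk: "s^n * k = 1"
begin

lemma s_gt2: "s > 2" using sdef k0 by simp

lemma kpow_top: "k * s^(n-2) = 1 / s^2"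
proof -
  have "s^n = s^(n-2) * s^2" using n6 by (intro pow_split) auto
  thus ?thesis using sk s_gt2 by (simp add: field_simps)
qed

lemma kpow_top1: "k * s^(n-1) = 1 / s"
proof -
  have "s^n = s^(n-1) * s^1" using n6 by (intro pow_split) auto
  thus ?thesis using sk s_gt2 by (simp add: field_simps)
qed

lemma kpow_le: "j \<le> n - 2 \<Longrightarrow> k * s^j \<le> 1 / s^2"
proof -
  assume "j \<le> n - 2"
  hence "s^j \<le> s^(n-2)" using s_gt2 by (intro power_increasing) auto
  hence "k * s^j \<le> k * s^(n-2)" using k0 by simp
  thus ?thesis using kpow_top by simp
qed

lemma kpow_ge: "k \<le> k * s^j"
  using s_gt2 k0 by (simp add: one_le_power)

lemma inv_s2_lt: "1 / s^2 < 1 / (2 * s)"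
  using s_gt2 by (simp add: divide_simps power2_eq_square)

lemma M_small: "m \<in> Mset s k n \<Longrightarrow> m \<notin> {1/(2 * s), 1/s} \<Longrightarrow> k \<le> m \<and> m \<le> 1/s^2"
  unfolding Mset_def using kpow_le kpow_ge by auto

lemma M_pos: "m \<in> Mset s k n \<Longrightarrow> m > 0 \<and> m \<le> 1/s"
proof -
  assume m: "m \<in> Mset s k n"
  have s2: "s > 2" by (rule s_gt2)
  have a: "1/s^2 \<le> 1/s" using s2 by (simp add: divide_simps power2_eq_square)
  have b: "1/(2 * s) \<le> 1/s" using s2 by (simp add: divide_simps)
  show ?thesis
  proof (cases "m \<in> {1/(2 * s), 1/s}")
    case True thus ?thesis using s2 b by auto
  next
    case False
    then obtain j where "j \<le> n - 2" "m = k * s^j" using m unfolding Mset_def by auto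
    thus ?thesis using kpow_le[of j] k0 s2 a by auto
  qed
qed

lemma k_in_M: "k \<in> Mset s k n"
  unfolding Mset_def by (auto intro: exI[of _ 0])

lemma cell_k: "cell s k n a b \<Longrightarrow> (a \<le> k \<longleftrightarrow> b < k)"
  using k_in_M unfolding cell_def by force

lemma cell1: assumes "cell s k n a b" shows "cell s k n (a/s) (b/s)"
proof -
  have c: "0 < a" "a \<le> b" "b < 1/2" "\<forall>m\<in>Mset s k n. m < a \<or> b < m" using assms by (auto simp: cell_def)
  have s2: "s > 2" by (rule s_gt2)
  have "m < a/s \<or> b/s < m" if m: "m \<in> Mset s k n" for m
  proof (rule ccontr)
    assume "\<not> (m < a/s \<or> b/s < m)"
    hence mm: "a/s \<le> m" "m \<le> b/s" by auto
    have "m < 1/(2 * s)" using mm c s2 by (simp add: divide_simps)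
    moreover have "m \<noteq> 1/s" using mm c s2 by (auto simp: divide_simps)
    ultimately obtain j where j: "j \<le> n - 2" "m = k * s^j"
      using m unfolding Mset_def by auto
    have sm: "a \<le> s*m" "s*m \<le> b" using mm s2 by (auto simp: divide_simps mult.commute)
    have "s * m \<in> Mset s k n"
    proof (cases "j = n - 2")
      case True
      hence "s * m = 1/s" using j kpow_top s2 by (simp add: power2_eq_square field_simps)
      thus ?thesis unfolding Mset_def by simp
    next
      case False
      hence "s * m = k * s^(Suc j)" "Suc j \<le> n - 2" using j by (auto simp: algebra_simps)
      thus ?thesis unfolding Mset_def by blast
    qed
    thus False using c(4) sm by force
  qed
  thus ?thesis using c s2 by (auto simp: cell_def divide_simps)
qed

lemma cell2: assumes "cell s k n a b" shows "cell s k n ((1-b)/s) ((1-a)/s)"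
proof -
  have c: "0 < a" "a \<le> b" "b < 1/2" using assms by (auto simp: cell_def)
  have s2: "s > 2" by (rule s_gt2)
  have lo: "1/(2 * s) < (1-b)/s" using c s2 by (simp add: divide_simps)
  have hi: "(1-a)/s < 1/s" using c s2 by (simp add: divide_simps)
  have "m < (1-b)/s \<or> (1-a)/s < m" if m: "m \<in> Mset s k n" for m
  proof (cases "m \<in> {1/(2 * s), 1/s}")
    case True thus ?thesis using lo hi by auto
  next
    case False
    hence "m \<le> 1/s^2" using M_small m by auto
    thus ?thesis using lo inv_s2_lt by auto
  qed
  moreover have "0 < (1-b)/s" using c s2 by simp
  moreover have "(1-a)/s < 1/2" using hi s2 by (simp add: divide_simps)
  moreover have "(1-b)/s \<le> (1-a)/s" using c s2 by (simp add: divide_simps)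
  ultimately show ?thesis by (auto simp: cell_def)
qed

lemma cell3: assumes "cell s k n a b" "b < k" shows "cell s k n ((1+a)/s) ((1+b)/s)"
proof -
  have c: "0 < a" "a \<le> b" "b < 1/2" using assms by (auto simp: cell_def)
  have s2: "s > 2" by (rule s_gt2)
  have lo: "1/s < (1+a)/s" using c s2 by (simp add: divide_simps)
  have hi: "(1+b)/s < 1/2" using assms(2) s2 sdef by (simp add: divide_simps)
  have "m < (1+a)/s \<or> (1+b)/s < m" if m: "m \<in> Mset s k n" for m
    using M_pos[OF m] lo by auto
  moreover have "0 < (1+a)/s" using c s2 by simp
  moreover have "(1+a)/s \<le> (1+b)/s" using c s2 by (simp add: divide_simps)
  ultimately show ?thesis using hi by (auto simp: cell_def)
qed

end


context
  fixes s k :: real and n :: nat and h :: "real \<Rightarrow> complex" and z :: complex and G :: "real set" and V :: real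
  assumes n6: "n \<ge> 6" and k0: "0 < k" and k2: "k < 1/2" and sdef: "s = 2 + 2*k" and sk: "s^n * k = 1"
    and z1: "cmod z > 1"
    and G1: "\<And>x. x \<in> G \<Longrightarrow> x / s \<in> G"
    and G2: "\<And>x. x \<in> G \<Longrightarrow> 0 < x \<Longrightarrow> x < 1/2 \<Longrightarrow> (1 - x) / s \<in> G"
    and G3: "\<And>x. x \<in> G \<Longrightarrow> 0 < x \<Longrightarrow> x < k \<Longrightarrow> (1 + x) / s \<in> G"
    and eqn: "\<And>x. x \<in> G \<Longrightarrow> 0 < x \<Longrightarrow> x < 1/2 \<Longrightarrow>
                z * h x = h (x / s) + h ((1 - x) / s) + (if x \<le> k then h ((1 + x) / s) else 0)"
    and Vb: "\<And>L. sorted (flat L) \<Longrightarrow> set (flat L) \<subseteq> {0<..<1/2} \<Longrightarrow> pairsum h L \<le> V"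
begin

lemma sum_list_filter_if: "sum_list (map f (filter P L)) = sum_list (map (\<lambda>p. if P p then f p else (0::real)) L)"
  by (induction L) auto

definition adm :: "(real \<times> real) list \<Rightarrow> bool" where
  "adm L \<longleftrightarrow> sorted (flat L) \<and> (\<forall>(a,b)\<in>set L. a \<in> G \<and> b \<in> G \<and> cell s k n a b)"

definition nextL :: "(real \<times> real) list \<Rightarrow> (real \<times> real) list" where
  "nextL L = map (\<lambda>(a,b). (a/s, b/s)) L @ rev (map (\<lambda>(a,b). ((1-b)/s, (1-a)/s)) L)
     @ map (\<lambda>(a,b). ((1+a)/s, (1+b)/s)) (filter (\<lambda>(a,b). b < k) L)"

lemma s2: "s > 2" using sdef k0 by simp

lemma adm_range: "adm L \<Longrightarrow> x \<in> set (flat L) \<Longrightarrow> 0 < x \<and> x < 1/2"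
  unfolding adm_def set_flat cell_def by fastforce

lemma adm_next: assumes "adm L" shows "adm (nextL L)"
proof -
  have sL: "sorted (flat L)" and cL: "\<forall>(a,b)\<in>set L. a \<in> G \<and> b \<in> G \<and> cell s k n a b"
    using assms by (auto simp: adm_def)
  have rng: "\<And>x. x \<in> set (flat L) \<Longrightarrow> 0 < x \<and> x < 1/2" using adm_range[OF assms] by blast
  define A where "A = map (\<lambda>x. x / s) (flat L)"
  define B where "B = rev (map (\<lambda>x. (1 - x) / s) (flat L))"
  define C where "C = map (\<lambda>x. (1 + x) / s) (flat (filter (\<lambda>(a,b). b < k) L))"
  have fl: "flat (nextL L) = A @ B @ C"
    unfolding nextL_def A_def B_def C_def
    using flat_map_mono[of "\<lambda>x. x/s" L] flat_rev_map[of "\<lambda>x. (1-x)/s" L]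
      flat_map_mono[of "\<lambda>x. (1+x)/s" "filter (\<lambda>(a,b). b < k) L"]
    by simp
  have sA: "sorted A" unfolding A_def sorted_map
    by (rule sorted_wrt_mono_rel[OF _ sL]) (use s2 in \<open>auto simp: divide_right_mono\<close>)
  have sB: "sorted B" unfolding B_def sorted_wrt_rev sorted_wrt_map
    by (rule sorted_wrt_mono_rel[OF _ sL]) (use s2 in \<open>auto simp: divide_right_mono\<close>)
  have sC: "sorted C" unfolding C_def sorted_map
    by (rule sorted_wrt_mono_rel[OF _ sorted_flat_filter[OF sL]]) (use s2 in \<open>auto simp: divide_right_mono\<close>)
  have AB: "\<forall>x\<in>set A. \<forall>y\<in>set B. x \<le> y"
  proof (intro ballI)
    fix x y assume "x \<in> set A" "y \<in> set B"
    then obtain u v where u: "u \<in> set (flat L)" "x = u/s" and v: "v \<in> set (flat L)" "y = (1-v)/s"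
      unfolding A_def B_def by auto
    show "x \<le> y" using rng[OF u(1)] rng[OF v(1)] s2 u(2) v(2) by (simp add: divide_right_mono)
  qed
  have BC: "\<forall>x\<in>set B. \<forall>y\<in>set C. x \<le> y"
  proof (intro ballI)
    fix x y assume "x \<in> set B" "y \<in> set C"
    then obtain u v where u: "u \<in> set (flat L)" "x = (1-u)/s" and v: "v \<in> set (flat L)" "y = (1+v)/s"
      unfolding C_def B_def using set_flat_filter by fastforce
    show "x \<le> y" using rng[OF u(1)] rng[OF v(1)] s2 u(2) v(2) by (simp add: divide_right_mono)
  qed
  have AC: "\<forall>x\<in>set A. \<forall>y\<in>set C. x \<le> y"
  proof (intro ballI)
    fix x y assume "x \<in> set A" "y \<in> set C"
    then obtain u v where u: "u \<in> set (flat L)" "x = u/s" and v: "v \<in> set (flat L)" "y = (1+v)/s"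
      unfolding C_def A_def using set_flat_filter by fastforce
    show "x \<le> y" using rng[OF u(1)] rng[OF v(1)] s2 u(2) v(2) by (simp add: divide_right_mono)
  qed
  have sorted: "sorted (flat (nextL L))" unfolding fl
    using sA sB sC AB BC AC by (auto simp: sorted_append)
  have cells: "\<forall>(a,b)\<in>set (nextL L). a \<in> G \<and> b \<in> G \<and> cell s k n a b"
  proof
    fix p assume "p \<in> set (nextL L)"
    then consider (1) a b where "(a,b) \<in> set L" "p = (a/s, b/s)"
      | (2) a b where "(a,b) \<in> set L" "p = ((1-b)/s, (1-a)/s)"
      | (3) a b where "(a,b) \<in> set L" "b < k" "p = ((1+a)/s, (1+b)/s)"
      unfolding nextL_def by auto
    then show "case p of (a,b) \<Rightarrow> a \<in> G \<and> b \<in> G \<and> cell s k n a b"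
    proof cases
      case 1
      have c: "a \<in> G" "b \<in> G" "cell s k n a b" using 1 cL by auto
      show ?thesis using 1 c G1 cell1[OF n6 k0 k2 sdef sk c(3)] by auto
    next
      case 2
      have c: "a \<in> G" "b \<in> G" "cell s k n a b" using 2 cL by auto
      have r: "0 < a" "b < 1/2" "a \<le> b" using c(3) by (auto simp: cell_def)
      show ?thesis using 2 c r G2 cell2[OF n6 k0 k2 sdef sk c(3)] by auto
    next
      case 3
      have c: "a \<in> G" "b \<in> G" "cell s k n a b" using 3 cL by auto
      have r: "0 < a" "b < 1/2" "a \<le> b" using c(3) by (auto simp: cell_def)
      show ?thesis using 3 c r G3 cell3[OF n6 k0 k2 sdef sk c(3) 3(2)] by auto
    qed
  qed
  show ?thesis using sorted cells by (simp add: adm_def)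
qed

lemma pair_ineq:
  assumes "a \<in> G" "b \<in> G" "cell s k n a b"
  shows "cmod z * cmod (h b - h a) \<le> cmod (h (b/s) - h (a/s)) + cmod (h ((1-a)/s) - h ((1-b)/s))
          + (if b < k then cmod (h ((1+b)/s) - h ((1+a)/s)) else 0)"
proof -
  have r: "0 < a" "a \<le> b" "b < 1/2" using assms(3) by (auto simp: cell_def)
  have ck: "a \<le> k \<longleftrightarrow> b < k" by (rule cell_k[OF n6 k0 k2 sdef sk assms(3)])
  have bk: "b \<le> k \<longleftrightarrow> b < k" using ck r by auto
  have ea: "z * h a = h (a / s) + h ((1 - a) / s) + (if a \<le> k then h ((1 + a) / s) else 0)"
    using eqn[OF assms(1)] r by auto
  have eb: "z * h b = h (b / s) + h ((1 - b) / s) + (if b \<le> k then h ((1 + b) / s) else 0)"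
    using eqn[OF assms(2)] r by auto
  have "z * (h b - h a) = (h (b/s) - h (a/s)) + (h ((1-b)/s) - h ((1-a)/s))
          + (if b < k then h ((1+b)/s) - h ((1+a)/s) else 0)"
    using ea eb ck bk by (auto simp: algebra_simps)
  hence "cmod z * cmod (h b - h a) = cmod ((h (b/s) - h (a/s)) + (h ((1-b)/s) - h ((1-a)/s))
          + (if b < k then h ((1+b)/s) - h ((1+a)/s) else 0))"
    by (metis norm_mult)
  also have "\<dots> \<le> cmod (h (b/s) - h (a/s)) + cmod (h ((1-b)/s) - h ((1-a)/s))
          + cmod (if b < k then h ((1+b)/s) - h ((1+a)/s) else 0)"
    by (meson norm_triangle_ineq norm_triangle_le add_mono order_refl)
  also have "\<dots> = cmod (h (b/s) - h (a/s)) + cmod (h ((1-a)/s) - h ((1-b)/s))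
          + (if b < k then cmod (h ((1+b)/s) - h ((1+a)/s)) else 0)"
    by (simp add: norm_minus_commute)
  finally show ?thesis .
qed

lemma pairsum_next: assumes "adm L" shows "cmod z * pairsum h L \<le> pairsum h (nextL L)"
proof -
  have cL: "\<forall>(a,b)\<in>set L. a \<in> G \<and> b \<in> G \<and> cell s k n a b" using assms by (auto simp: adm_def)
  have "pairsum h (nextL L) = sum_list (map (\<lambda>(a,b). cmod (h (b/s) - h (a/s)) + cmod (h ((1-a)/s) - h ((1-b)/s))
          + (if b < k then cmod (h ((1+b)/s) - h ((1+a)/s)) else 0)) L)"
    unfolding nextL_def pairsum_simps pairsum_map
    by (simp add: sum_list_filter_if sum_list_addf[symmetric] case_prod_unfold add.assoc)
  moreover have "cmod z * pairsum h L = sum_list (map (\<lambda>(a,b). cmod z * cmod (h b - h a)) L)"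
    unfolding pairsum_def by (simp add: sum_list_const_mult[symmetric] case_prod_unfold)
  moreover have "sum_list (map (\<lambda>(a,b). cmod z * cmod (h b - h a)) L) \<le>
      sum_list (map (\<lambda>(a,b). cmod (h (b/s) - h (a/s)) + cmod (h ((1-a)/s) - h ((1-b)/s))
          + (if b < k then cmod (h ((1+b)/s) - h ((1+a)/s)) else 0)) L)"
    by (rule sum_list_mono) (use cL pair_ineq in auto)
  ultimately show ?thesis by simp
qed

lemma constancy: assumes "a \<in> G" "b \<in> G" "cell s k n a b" shows "h a = h b"
proof -
  define SS where "SS = {pairsum h L | L. adm L}"
  have ne: "pairsum h [] \<in> SS" unfolding SS_def adm_def by (rule CollectI, rule exI[of _ "[]"]) simp
  have bdd: "bdd_above SS"
  proof
    fix x assume "x \<in> SS"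
    then obtain L where L: "adm L" "x = pairsum h L" unfolding SS_def by auto
    have "set (flat L) \<subseteq> {0<..<1/2}" using adm_range[OF L(1)] by auto
    moreover have "sorted (flat L)" using L(1) by (simp add: adm_def)
    ultimately show "x \<le> V" using Vb[of L] L(2) by simp
  qed
  define S where "S = Sup SS"
  have S0: "S \<ge> 0" using cSup_upper[OF ne bdd] by (simp add: S_def)
  have "x \<le> S / cmod z" if xS: "x \<in> SS" for x
  proof -
    obtain L where L: "adm L" "x = pairsum h L" using xS unfolding SS_def by auto
    have "pairsum h (nextL L) \<in> SS" using adm_next[OF L(1)] unfolding SS_def by auto
    hence "pairsum h (nextL L) \<le> S" unfolding S_def using bdd by (rule cSup_upper)
    hence "cmod z * x \<le> S" using pairsum_next[OF L(1)] L(2) by simp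
    moreover have "cmod z > 0" using z1 by linarith
    ultimately show ?thesis by (simp add: pos_le_divide_eq mult.commute)
  qed
  hence "S \<le> S / cmod z" unfolding S_def using ne by (intro cSup_least) auto
  moreover have zp: "cmod z > 0" using z1 by linarith
  ultimately have "S * cmod z \<le> S" by (simp add: pos_le_divide_eq)
  hence "S * (cmod z - 1) \<le> 0" by (simp add: algebra_simps)
  moreover have "cmod z - 1 > 0" using z1 by simp
  ultimately have "S \<le> 0" by (simp add: mult_le_0_iff)
  have "adm [(a,b)]" using assms by (auto simp: adm_def cell_def)
  hence "pairsum h [(a,b)] \<in> SS" unfolding SS_def by blast
  hence "pairsum h [(a,b)] \<le> S" unfolding S_def using bdd by (rule cSup_upper)
  hence "cmod (h b - h a) \<le> S" by simp
  hence "cmod (h b - h a) \<le> 0" using \<open>S \<le> 0\<close> by linarith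
  hence "h b - h a = 0" by (meson norm_le_zero_iff)
  thus ?thesis by simp
qed


lemma kpow_top3: "k * s^(n-3) = 1 / s^3"
proof -
  have "s^n = s^(n-3) * s^3" using n6 by (intro pow_split) auto
  thus ?thesis using sk s2 by (simp add: field_simps)
qed

lemma kpow_mono: "i \<le> j \<Longrightarrow> k * s^i \<le> k * s^j"
  using s2 k0 by (simp add: power_increasing)

lemma kpow_strict: "i < j \<Longrightarrow> k * s^i < k * s^j"
  using s2 k0 by (simp add: power_strict_increasing)

lemma k_small: "k < 1 / s^2"
proof -
  have "k * s^0 < k * s^(n-2)" using n6 by (intro kpow_strict) auto
  thus ?thesis using kpow_top[OF n6 k0 k2 sdef sk] by simp
qed

lemma s2_lt: "1 / s^2 < 1 / (2 * s)" using s2 by (simp add: divide_simps power2_eq_square)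
lemma s3_lt: "1 / s^3 < 1 / (2 * s^2)" using s2 by (simp add: divide_simps power2_eq_square power3_eq_cube)
lemma s2s_lt: "1 / (2 * s^2) < 1 / s^2" using s2 by (simp add: divide_simps)
lemma s_lt: "1 / (2 * s) < 1 / s" using s2 by (simp add: divide_simps)
lemma s_half: "1 / s < 1 / 2" using s2 by (simp add: divide_simps)

lemma cell_noM: assumes "0 < a" "a \<le> b" "b < 1/2" "\<And>m. m \<in> Mset s k n \<Longrightarrow> m < a \<or> b < m"
  shows "cell s k n a b" using assms by (auto simp: cell_def)

lemma const_int:
  assumes "\<And>a b. lo < a \<Longrightarrow> a \<le> b \<Longrightarrow> b < hi \<Longrightarrow> cell s k n a b"
    and "x \<in> G" "y \<in> G" "lo < x" "x < hi" "lo < y" "y < hi"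
  shows "h x = h y"
proof (cases "x \<le> y")
  case True thus ?thesis using assms constancy by blast
next
  case False thus ?thesis using assms constancy[of y x] by force
qed

lemma cell_Jn: "1/(2 * s) < a \<Longrightarrow> a \<le> b \<Longrightarrow> b < 1/s \<Longrightarrow> cell s k n a b"
proof (rule cell_noM)
  fix m assume "1/(2 * s) < a" "a \<le> b" "b < 1/s" "m \<in> Mset s k n"
  thus "m < a \<or> b < m"
    using M_small[OF n6 k0 k2 sdef sk] s2_lt by (cases "m \<in> {1/(2 * s), 1/s}") force+
next
  show "0 < a" if "1/(2 * s) < a" for a using that s2 by (smt (verit) divide_pos_pos)
  show "b < 1/2" if "b < 1/s" for b using that s_half by linarith
qed

lemma cell_Jn2: "1/s^3 < a \<Longrightarrow> a \<le> b \<Longrightarrow> b < 1/s^2 \<Longrightarrow> cell s k n a b"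
proof (rule cell_noM)
  fix m assume ab: "1/s^3 < a" "a \<le> b" "b < 1/s^2" and m: "m \<in> Mset s k n"
  show "m < a \<or> b < m"
  proof (cases "m \<in> {1/(2 * s), 1/s}")
    case True thus ?thesis using ab s2_lt s_lt by auto
  next
    case False
    then obtain j where j: "j \<le> n - 2" "m = k * s^j" using m unfolding Mset_def by auto
    show ?thesis
    proof (cases "j = n - 2")
      case True thus ?thesis using j ab kpow_top[OF n6 k0 k2 sdef sk] by simp
    next
      case False
      hence "k * s^j \<le> k * s^(n-3)" using j by (intro kpow_mono) auto
      thus ?thesis using j ab kpow_top3 by simp
    qed
  qed
next
  show "0 < a" if "1/s^3 < a" for a using that s2 by (smt (verit) divide_pos_pos zero_less_power)
  show "b < 1/2" if "b < 1/s^2" for b using that s2_lt s_lt s_half by linarith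
qed

lemma cell_J0: "0 < a \<Longrightarrow> a \<le> b \<Longrightarrow> b < k \<Longrightarrow> cell s k n a b"
proof (rule cell_noM)
  fix m assume "0 < a" "a \<le> b" "b < k" "m \<in> Mset s k n"
  thus "m < a \<or> b < m"
    using M_small[OF n6 k0 k2 sdef sk] k_small s2_lt s_lt by (cases "m \<in> {1/(2 * s), 1/s}") force+
qed (use k2 in auto)


lemma main_dichotomy:
  assumes Gd: "\<And>a b. 0 \<le> a \<Longrightarrow> a < b \<Longrightarrow> b \<le> 1/2 \<Longrightarrow> \<exists>x\<in>G. a < x \<and> x < b"
  shows "z^n * (z - 2) = 2 \<or> (\<forall>x\<in>G. 0 < x \<and> x < 1/2 \<and> x \<notin> Mset s k n \<longrightarrow> h x = 0)"
proof -
  have z0: "z \<noteq> 0" using z1 by (metis norm_zero not_one_less_zero)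
  have zne1: "z \<noteq> 1" using z1 by (metis norm_one less_irrefl)
  have sp: "s > 0" using s2 by simp
  have ks: "k < 1/(2 * s)" using k_small s2_lt by linarith
  obtain p where p: "p \<in> G" "1/(2 * s) < p" "p < 1/s"
    using Gd[of "1/(2 * s)" "1/s"] s_lt s_half sp by auto
  define w where "w = h p"
  have psi2: "1/(2 * s) < (1 - x)/s \<and> (1 - x)/s < 1/s" if "0 < x" "x < 1/2" for x
    using that sp by (simp add: divide_simps)
  have W: "h y = w" if "y \<in> G" "1/(2 * s) < y" "y < 1/s" for y
    unfolding w_def by (rule const_int[OF cell_Jn]) (use that p in auto)
  have q1: "0 < 1/(2 * s)" "0 < 1/s^2" "0 < 1/s" using sp by auto
  have hpos: "0 < y" if "1/(2 * s) < y" for y using that q1 by linarith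
  have Wpsi: "h ((1 - x)/s) = w" if "x \<in> G" "0 < x" "x < 1/2" for x
    using W[of "(1-x)/s"] G2[OF that] psi2[OF that(2,3)] by auto
  have Jn2: "h (y/s) = (z - 1) * w" if "y \<in> G" "1/(2 * s) < y" "y < 1/s" for y
  proof -
    have y: "0 < y" "y < 1/2" "\<not> y \<le> k" using that hpos s_half ks by auto
    have "z * h y = h (y/s) + h ((1 - y)/s)" using eqn[OF that(1) y(1,2)] y(3) by simp
    thus ?thesis using W[OF that] Wpsi[OF that(1) y(1,2)] by (simp add: algebra_simps)
  qed
  have pS: "1/(2 * s^2) < p/s" "p/s < 1/s^2" using p sp by (auto simp: divide_simps power2_eq_square)
  have U: "h x = w" if "x \<in> G" "1/s^2 < x" "x < 1/(2 * s)" for x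
  proof -
    have x: "0 < x" "x < 1/2" "\<not> x \<le> k" using that k_small s_lt s_half s2_lt q1 by linarith+
    have xs: "1/s^3 < x/s" "x/s < 1/(2 * s^2)" using that sp by (auto simp: divide_simps power2_eq_square power3_eq_cube)
    have a1: "x/s < 1/s^2" using xs s2s_lt by linarith
    have a2: "1/s^3 < p/s" using pS s3_lt by linarith
    have "h (x/s) = h (p/s)"
      by (rule const_int[OF cell_Jn2 _ _ xs(1) a1 a2 pS(2)]) (use G1 that(1) p(1) in auto)
    hence "h (x/s) = (z - 1) * w" using Jn2[OF p] by simp
    moreover have "z * h x = h (x/s) + h ((1 - x)/s)" using eqn[OF that(1) x(1,2)] x(3) by simp
    ultimately have "z * h x = z * w" using Wpsi[OF that(1) x(1,2)] by (simp add: algebra_simps)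
    thus ?thesis using z0 by simp
  qed
  have Vv: "z * h x = 2 * w" if "x \<in> G" "1/s < x" "x < 1/2" for x
  proof -
    have x: "0 < x" "\<not> x \<le> k" using that q1 ks s_lt by linarith+
    have "1/s^2 < x/s" "x/s < 1/(2 * s)" using that sp by (auto simp: divide_simps power2_eq_square)
    hence "h (x/s) = w" using U G1[OF that(1)] by auto
    moreover have "z * h x = h (x/s) + h ((1 - x)/s)" using eqn[OF that(1) x(1) that(3)] x(2) by simp
    ultimately show ?thesis using Wpsi[OF that(1) x(1) that(3)] by simp
  qed
  define lo where "lo j = (if j = 0 then 0 else k * s^(j-1))" for j :: nat
  have chain: "z^j * ((z - 1) * h x - w) = 2 * w / z"
    if "j \<le> n - 2" "x \<in> G" "lo j < x" "x < k * s^j" for j x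
    using that
  proof (induction j arbitrary: x)
    case 0
    have x: "0 < x" "x < k" using 0 by (auto simp: lo_def)
    have x2: "x < 1/2" using x k2 by simp
    have xk1: "x/s < x" using x s2 by (simp add: divide_simps)
    have xk: "x/s < k" "0 < x/s" using x xk1 sp by auto
    have "h (x/s) = h x"
      by (rule const_int[of 0 k, OF cell_J0]) (use x xk G1[OF 0(2)] 0(2) in auto)
    moreover have "h ((1 + x)/s) = 2 * w / z"
    proof -
      have "1/s < (1+x)/s" "(1+x)/s < 1/2" using x sp sdef by (auto simp: divide_simps)
      thus ?thesis using Vv[OF G3[OF 0(2) x]] z0 by (simp add: field_simps)
    qed
    moreover have "z * h x = h (x/s) + h ((1 - x)/s) + h ((1 + x)/s)" using eqn[OF 0(2) x(1) x2] x by simp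
    ultimately have "z * h x = h x + w + 2 * w / z" using Wpsi[OF 0(2) x(1) x2] by simp
    thus ?case by (simp add: algebra_simps)
  next
    case (Suc j)
    have x: "k * s^j < x" "x < k * s^(Suc j)" using Suc.prems by (auto simp: lo_def)
    have kx: "k < x" using kpow_ge[OF n6 k0 k2 sdef sk, of j] x by linarith
    have x2: "x < 1/2" using x kpow_le[OF n6 k0 k2 sdef sk, of "Suc j"] Suc.prems(1) s2_lt s_lt s_half by linarith
    have x0: "0 < x" using kx k0 by linarith
    have xs: "lo j < x/s" "x/s < k * s^j"
    proof -
      show "x/s < k * s^j" using x sp by (simp add: divide_simps mult.commute mult.left_commute)
      show "lo j < x/s"
      proof (cases j)
        case 0 thus ?thesis using x0 sp by (simp add: lo_def)
      next
        case (Suc i)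
        thus ?thesis using x sp by (simp add: lo_def divide_simps mult.commute mult.left_commute)
      qed
    qed
    have IH: "z^j * ((z - 1) * h (x/s) - w) = 2 * w / z"
      using Suc.IH[OF _ G1[OF Suc.prems(2)] xs] Suc.prems(1) by simp
    have "z * h x = h (x/s) + h ((1 - x)/s)" using eqn[OF Suc.prems(2) x0 x2] kx by simp
    hence "z * h x = h (x/s) + w" using Wpsi[OF Suc.prems(2) x0 x2] by simp
    hence e: "h (x/s) = z * h x - w" by simp
    have "(z - 1) * h (x/s) - w = z * ((z - 1) * h x - w)" unfolding e by (simp add: algebra_simps)
    thus ?case using IH by (simp add: mult.assoc mult.left_commute)
  qed
  have pS2: "lo (n-2) < p/s" "p/s < k * s^(n-2)"
  proof -
    have "n - 2 \<noteq> 0" "n - 2 - 1 = n - 3" using n6 by auto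
    hence "lo (n-2) = 1/s^3" using kpow_top3 by (simp add: lo_def)
    thus "lo (n-2) < p/s" using pS s3_lt by simp
    show "p/s < k * s^(n-2)" using pS kpow_top[OF n6 k0 k2 sdef sk] by simp
  qed
  have E: "z^(n-2) * ((z - 1) * ((z - 1) * w) - w) = 2 * w / z"
    using chain[OF _ G1[OF p(1)] pS2] Jn2[OF p] by simp
  have r1: "(z - 1) * ((z - 1) * w) - w = z * ((z - 2) * w)" by (simp add: algebra_simps)
  have "z^(n-2) * (z * ((z - 2) * w)) * z = 2 * w"
    using E unfolding r1 using z0 by (simp add: eq_divide_eq)
  hence "(z^(n-2) * z * z) * ((z - 2) * w) = 2 * w" by (simp add: mult_ac)
  moreover have "z^(n-2) * z * z = z^n"
  proof -
    have "z^((n-2)+2) = z^(n-2) * z^2" by (rule power_add)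
    moreover have "(n-2)+2 = n" using n6 by simp
    ultimately have e: "z^n = z^(n-2) * z^2" by metis
    show ?thesis unfolding e by (simp add: power2_eq_square mult.assoc)
  qed
  ultimately have key: "w * (z^n * (z - 2) - 2) = 0" by (simp add: algebra_simps)
  show ?thesis
  proof (cases "w = 0")
    case False thus ?thesis using key by simp
  next
    case True
    have "h x = 0" if "x \<in> G" "0 < x" "x < 1/2" "x \<notin> Mset s k n" for x
    proof -
      have xM: "x \<noteq> 1/s" "x \<noteq> 1/(2 * s)" "\<And>j. j \<le> n - 2 \<Longrightarrow> x \<noteq> k * s^j"
        using that(4) unfolding Mset_def by auto
      have xne: "x \<noteq> 1/s^2" using xM(3)[of "n-2"] kpow_top[OF n6 k0 k2 sdef sk] by simp
      consider "x < 1/s^2" | "1/s^2 < x" "x < 1/(2 * s)" | "1/(2 * s) < x" "x < 1/s" | "1/s < x"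
        using xM(1,2) xne by linarith
      then show ?thesis
      proof cases
        case 1
        define j where "j = (LEAST j. x < k * s^j)"
        have ex: "x < k * s^(n-2)" using 1 kpow_top[OF n6 k0 k2 sdef sk] by simp
        have j1: "x < k * s^j" unfolding j_def by (rule LeastI[of _ "n-2"]) (rule ex)
        have j2: "j \<le> n - 2" unfolding j_def by (rule Least_le) (rule ex)
        have j3: "lo j < x"
        proof (cases j)
          case 0 thus ?thesis using that(2) by (simp add: lo_def)
        next
          case (Suc i)
          have "\<not> x < k * s^i" using not_less_Least[of i "\<lambda>j. x < k * s^j"] Suc unfolding j_def by simp
          moreover have "x \<noteq> k * s^i" using xM(3)[of i] Suc j2 by simp
          ultimately show ?thesis using Suc by (simp add: lo_def)
        qed
        have "z^j * ((z - 1) * h x) = 0" using chain[OF j2 that(1) j3 j1] True by simp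
        thus ?thesis using z0 zne1 by simp
      next
        case 2 thus ?thesis using U that(1) True by simp
      next
        case 3 thus ?thesis using W that(1) True by simp
      next
        case 4 thus ?thesis using Vv[OF that(1) 4 that(3)] True z0 by simp
      qed
    qed
    thus ?thesis by blast
  qed
qed

end


fun varsum :: "(real \<Rightarrow> complex) \<Rightarrow> real list \<Rightarrow> real" where
  "varsum f [] = 0"
| "varsum f [x] = 0"
| "varsum f (x # y # r) = cmod (f y - f x) + varsum f (y # r)"

lemma varsum_nth: "varsum f xs = (\<Sum>i < length xs - 1. cmod (f (xs ! Suc i) - f (xs ! i)))"
proof (induction f xs rule: varsum.induct)
  case (3 f x y r)
  have "(\<Sum>i < length (x # y # r) - 1. cmod (f ((x # y # r) ! Suc i) - f ((x # y # r) ! i)))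
      = (\<Sum>i < Suc (length (y # r) - 1). cmod (f ((x # y # r) ! Suc i) - f ((x # y # r) ! i)))" by simp
  also have "\<dots> = cmod (f y - f x) + (\<Sum>i < length (y # r) - 1. cmod (f ((y # r) ! Suc i) - f ((y # r) ! i)))"
    by (subst sum.lessThan_Suc_shift) simp
  finally show ?case using 3 by simp
qed auto

lemma varsum_Cons_ge: "varsum f r \<le> varsum f (y # r)"
  by (cases r) auto

lemma bv01_list:
  assumes B: "\<forall>(m::nat) (x::nat \<Rightarrow> real). 0 \<le> x 0 \<and> x m \<le> 1 \<and> (\<forall>i<m. x i \<le> x (Suc i)) \<longrightarrow>
      (\<Sum>i<m. cmod (f (x (Suc i)) - f (x i))) \<le> B"
    and xs: "sorted xs" "set xs \<subseteq> {0..1}"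
  shows "varsum f xs \<le> B"
proof (cases xs)
  case Nil
  have "(\<Sum>i<(0::nat). cmod (f ((\<lambda>_. 0::real) (Suc i)) - f ((\<lambda>_. 0) i))) \<le> B" using B[rule_format, where m=0 and x="\<lambda>_. 0"] by simp
  thus ?thesis using Nil by simp
next
  case (Cons a r)
  define m where "m = length xs - 1"
  have len: "length xs = Suc m" using Cons m_def by simp
  have i0: "xs ! 0 \<in> set xs" "xs ! m \<in> set xs" using len by auto
  have "0 \<le> xs ! 0" using xs(2) i0 by auto
  moreover have "xs ! m \<le> 1" using xs(2) i0 by auto
  moreover have "\<forall>i<m. xs ! i \<le> xs ! Suc i" using xs(1) len by (auto intro: sorted_nth_mono)
  ultimately have "(\<Sum>i<m. cmod (f (xs ! Suc i) - f (xs ! i))) \<le> B" using B by blast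
  thus ?thesis using varsum_nth[of f xs] m_def by simp
qed

lemma pairsum_varsum: "pairsum f L \<le> varsum f (flat L)"
proof (induction L)
  case Nil then show ?case by simp
next
  case (Cons p L)
  obtain a b where p: "p = (a,b)" by fastforce
  have "varsum f (flat L) \<le> varsum f (b # flat L)" by (rule varsum_Cons_ge)
  thus ?case using Cons p by simp
qed

lemma pairsum_bv:
  assumes B: "\<forall>(m::nat) (x::nat \<Rightarrow> real). 0 \<le> x 0 \<and> x m \<le> 1 \<and> (\<forall>i<m. x i \<le> x (Suc i)) \<longrightarrow>
      (\<Sum>i<m. cmod (f (x (Suc i)) - f (x i))) \<le> B"
    and L: "sorted (flat L)" "set (flat L) \<subseteq> {0..1}"
  shows "pairsum f L \<le> B"
  using pairsum_varsum[of f L] bv01_list[OF B L] by linarith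

lemma pairsum_h:
  assumes B: "\<forall>(m::nat) (x::nat \<Rightarrow> real). 0 \<le> x 0 \<and> x m \<le> 1 \<and> (\<forall>i<m. x i \<le> x (Suc i)) \<longrightarrow>
      (\<Sum>i<m. cmod (f (x (Suc i)) - f (x i))) \<le> B"
    and L: "sorted (flat L)" "set (flat L) \<subseteq> {0<..<1/2}"
  shows "pairsum (\<lambda>x. f x + f (1 - x)) L \<le> 2 * B"
proof -
  define R where "R = rev (map (\<lambda>(a,b). ((\<lambda>x. 1 - x) b, (\<lambda>x. 1 - x) a)) L)"
  have fR: "flat R = rev (map (\<lambda>x. 1 - x) (flat L))" unfolding R_def by (rule flat_rev_map)
  have sR: "sorted (flat R)" unfolding fR sorted_wrt_rev sorted_wrt_map
    by (rule sorted_wrt_mono_rel[OF _ L(1)]) auto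
  have setR: "set (flat R) \<subseteq> {0..1}" unfolding fR using L(2) by auto
  have pR: "pairsum f R = sum_list (map (\<lambda>(a,b). cmod (f (1 - a) - f (1 - b))) L)"
    unfolding R_def pairsum_simps pairsum_map by (simp add: case_prod_unfold)
  have "pairsum (\<lambda>x. f x + f (1 - x)) L \<le> pairsum f L + sum_list (map (\<lambda>(a,b). cmod (f (1 - a) - f (1 - b))) L)"
    unfolding pairsum_def sum_list_addf[symmetric]
  proof (rule sum_list_mono)
    fix p assume "p \<in> set L"
    obtain a b where p: "p = (a,b)" by fastforce
    have "cmod (f b + f (1 - b) - (f a + f (1 - a))) \<le> cmod (f b - f a) + cmod (f (1 - a) - f (1 - b))"
    proof -
      have "f b + f (1 - b) - (f a + f (1 - a)) = (f b - f a) + (f (1 - b) - f (1 - a))" by simp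
      hence "cmod (f b + f (1 - b) - (f a + f (1 - a))) \<le> cmod (f b - f a) + cmod (f (1 - b) - f (1 - a))"
        by (metis norm_triangle_ineq)
      thus ?thesis by (simp add: norm_minus_commute)
    qed
    thus "(case p of (a, b) \<Rightarrow> cmod (f b + f (1 - b) - (f a + f (1 - a))))
        \<le> (case p of (a, b) \<Rightarrow> cmod (f b - f a)) + (case p of (a, b) \<Rightarrow> cmod (f (1 - a) - f (1 - b)))"
      using p by simp
  qed
  moreover have "pairsum f L \<le> B" by (rule pairsum_bv[OF B L(1)]) (use L(2) in auto)
  moreover have "pairsum f R \<le> B" by (rule pairsum_bv[OF B sR setR])
  ultimately show ?thesis using pR by linarith
qed


lemma lebesgue_affine_measurable_real: "(\<lambda>x::real. t + c * x) \<in> lebesgue \<rightarrow>\<^sub>M lebesgue"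
proof (cases "c = 0")
  case True thus ?thesis by simp
next
  case False
  thus ?thesis using lebesgue_affine_measurable[where c="\<lambda>_::real. c" and t=t] by simp
qed

lemma lebesgue_integral_affine:
  fixes g :: "real \<Rightarrow> complex"
  assumes g: "integrable lebesgue g" and c: "c \<noteq> 0"
  shows "integrable lebesgue (\<lambda>x. g (t + c * x))"
    and "integral\<^sup>L lebesgue g = \<bar>c\<bar> *\<^sub>R integral\<^sup>L lebesgue (\<lambda>x. g (t + c * x))"
proof -
  let ?T = "\<lambda>x::real. t + c * x"
  let ?D = "distr lebesgue lebesgue ?T"
  have L: "lebesgue = density ?D (\<lambda>_. ennreal \<bar>c\<bar>)" by (rule lebesgue_real_affine[OF c])
  have Tm: "?T \<in> lebesgue \<rightarrow>\<^sub>M lebesgue" by (rule lebesgue_affine_measurable_real)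
  have gm: "g \<in> borel_measurable lebesgue" using g by (rule borel_measurable_integrable)
  have gmD: "g \<in> borel_measurable ?D" using gm by simp
  have "integrable (density ?D (\<lambda>_. ennreal \<bar>c\<bar>)) g" using g L by simp
  hence "integrable ?D (\<lambda>x. \<bar>c\<bar> *\<^sub>R g x)"
    using integrable_density[OF gmD, of "\<lambda>_. \<bar>c\<bar>"] by simp
  hence "integrable ?D g" using c integrable_scaleR_right[of "1/\<bar>c\<bar>" ?D "\<lambda>x. \<bar>c\<bar> *\<^sub>R g x"] by simp
  thus "integrable lebesgue (\<lambda>x. g (t + c * x))" using integrable_distr_eq[OF Tm gm] by simp
  have "integral\<^sup>L lebesgue g = integral\<^sup>L (density ?D (\<lambda>_. ennreal \<bar>c\<bar>)) g" using L by simp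
  also have "\<dots> = integral\<^sup>L ?D (\<lambda>x. \<bar>c\<bar> *\<^sub>R g x)"
    using integral_density[OF gmD, of "\<lambda>_. \<bar>c\<bar>"] by simp
  also have "\<dots> = \<bar>c\<bar> *\<^sub>R integral\<^sup>L ?D g" by simp
  also have "integral\<^sup>L ?D g = integral\<^sup>L lebesgue (\<lambda>x. g (t + c * x))"
    using integral_distr[OF Tm gm] by simp
  finally show "integral\<^sup>L lebesgue g = \<bar>c\<bar> *\<^sub>R integral\<^sup>L lebesgue (\<lambda>x. g (t + c * x))" .
qed

lemma null_affine_image:
  fixes N :: "real set"
  assumes N: "N \<in> null_sets lebesgue" and c: "c \<noteq> 0"
  shows "(\<lambda>x. t + c * x) ` N \<in> null_sets lebesgue"
proof -
  have eq: "(\<lambda>x. t + c * x) ` N = (\<lambda>y. (-t/c) + (1/c) * y) -` N"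
  proof (intro set_eqI iffI)
    fix y assume "y \<in> (\<lambda>x. t + c * x) ` N"
    then obtain x where "x \<in> N" "y = t + c * x" by auto
    thus "y \<in> (\<lambda>y. (-t/c) + (1/c) * y) -` N" using c by (simp add: field_simps)
  next
    fix y assume y: "y \<in> (\<lambda>y. (-t/c) + (1/c) * y) -` N"
    have "y = t + c * ((-t/c) + (1/c) * y)" using c by (simp add: field_simps)
    thus "y \<in> (\<lambda>x. t + c * x) ` N" using y by (metis image_eqI vimageD)
  qed
  have "(\<lambda>y. (-t/c) + (1/c) * y) -` N \<inter> space lebesgue \<in> sets lebesgue"
    using N by (intro measurable_sets[OF lebesgue_affine_measurable_real]) auto
  hence m: "(\<lambda>x. t + c * x) ` N \<in> sets lebesgue" using eq by simp
  have "emeasure lebesgue ((\<lambda>x. c *\<^sub>R x + t) ` N) = \<bar>c\<bar> ^ DIM(real) * emeasure lebesgue N"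
    by (rule emeasure_lebesgue_affine)
  moreover have "(\<lambda>x. c *\<^sub>R x + t) ` N = (\<lambda>x. t + c * x) ` N" by (auto simp: add.commute)
  moreover have "emeasure lebesgue N = 0" using N by auto
  ultimately have "emeasure lebesgue ((\<lambda>x. t + c * x) ` N) = 0" by simp
  thus ?thesis using m by (simp add: null_sets_def)
qed


lemma piece:
  fixes F g :: "real \<Rightarrow> complex"
  assumes F: "integrable lebesgue F" and S: "S \<in> sets lebesgue" and c: "c \<noteq> 0"
    and eq: "\<And>y. indicator S (t + c*y) *\<^sub>R F (t + c*y) = g y"
  shows "integrable lebesgue g" "integral\<^sup>L lebesgue (\<lambda>x. indicator S x *\<^sub>R F x) = \<bar>c\<bar> *\<^sub>R integral\<^sup>L lebesgue g"
proof -
  have I: "integrable lebesgue (\<lambda>x. indicator S x *\<^sub>R F x)" by (rule integrable_mult_indicator[OF S F])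
  show "integrable lebesgue g" using lebesgue_integral_affine(1)[OF I c, of t] eq by simp
  show "integral\<^sup>L lebesgue (\<lambda>x. indicator S x *\<^sub>R F x) = \<bar>c\<bar> *\<^sub>R integral\<^sup>L lebesgue g"
    using lebesgue_integral_affine(2)[OF I c, of t] eq by simp
qed

lemma Ttilde_pieces:
  fixes k s x :: real
  assumes k: "0 < k" "k < 1/2" and sdef: "s = 2 + 2*k"
  shows "x = 0 \<Longrightarrow> \<bar>paired_tent k x\<bar> = 0"
    and "0 < x \<Longrightarrow> x \<le> 1/s \<Longrightarrow> \<bar>paired_tent k x\<bar> = 1 - s*x"
    and "1/s < x \<Longrightarrow> x \<le> 1/2 \<Longrightarrow> \<bar>paired_tent k x\<bar> = s*x - 1"
    and "1/2 < x \<Longrightarrow> x < 1 - 1/s \<Longrightarrow> \<bar>paired_tent k x\<bar> = s*(1-x) - 1"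
    and "1 - 1/s \<le> x \<Longrightarrow> \<bar>paired_tent k x\<bar> = 1 - s*(1-x)"
proof -
  have s2: "s > 2" using k sdef by simp
  show "x = 0 \<Longrightarrow> \<bar>paired_tent k x\<bar> = 0" by (simp add: paired_tent_def)
  show "0 < x \<Longrightarrow> x \<le> 1/s \<Longrightarrow> \<bar>paired_tent k x\<bar> = 1 - s*x"
  proof -
    assume x: "0 < x" "x \<le> 1/s"
    have "x \<le> 1/2" using x s2 by (smt (verit) frac_le)
    moreover have "s * x \<le> 1" using x s2 by (simp add: field_simps)
    ultimately show ?thesis using x by (simp add: paired_tent_def sdef algebra_simps)
  qed
  show "1/s < x \<Longrightarrow> x \<le> 1/2 \<Longrightarrow> \<bar>paired_tent k x\<bar> = s*x - 1"
  proof -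
    assume x: "1/s < x" "x \<le> 1/2"
    have "x > 0" using x s2 by (smt (verit) divide_pos_pos)
    moreover have "s * x > 1" using x s2 by (simp add: field_simps)
    ultimately show ?thesis using x by (simp add: paired_tent_def sdef algebra_simps)
  qed
  show "1/2 < x \<Longrightarrow> x < 1 - 1/s \<Longrightarrow> \<bar>paired_tent k x\<bar> = s*(1-x) - 1"
  proof -
    assume x: "1/2 < x" "x < 1 - 1/s"
    have "s * (1 - x) > 1" using x s2 by (simp add: field_simps)
    thus ?thesis using x by (simp add: paired_tent_def sdef algebra_simps)
  qed
  show "1 - 1/s \<le> x \<Longrightarrow> \<bar>paired_tent k x\<bar> = 1 - s*(1-x)"
  proof -
    assume x: "1 - 1/s \<le> x"
    have h: "1/s < 1/2" using s2 by (simp add: field_simps)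
    have "x > 1/2" using x h by linarith
    moreover have "s * (1 - x) \<le> 1" using x s2 by (simp add: field_simps)
    ultimately show ?thesis using x by (simp add: paired_tent_def sdef algebra_simps)
  qed
qed


definition Phi :: "real \<Rightarrow> real \<Rightarrow> (real \<Rightarrow> complex) \<Rightarrow> real \<Rightarrow> complex" where
  "Phi k s f y = (1/s) *\<^sub>R (f ((1-y)/s) + f (1 - (1-y)/s) + (if y \<le> k then f ((1+y)/s) + f (1 - (1+y)/s) else 0))"

lemma piece_eq:
  fixes F f :: "real \<Rightarrow> complex"
  assumes "\<And>y. (t + c*y \<in> S) \<longleftrightarrow> y \<in> R" "\<And>y. y \<in> R \<Longrightarrow> t + c*y \<in> {0..1}" "\<And>y. t + c*y = \<psi> y"
    and "F = (\<lambda>x. indicator {0..1} x *\<^sub>R f x)"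
  shows "indicator S (t + c*y) *\<^sub>R F (t + c*y) = indicator R y *\<^sub>R f (\<psi> y)"
  using assms by (cases "y \<in> R") (auto simp: indicator_def)

context
  fixes k s :: real and f :: "real \<Rightarrow> complex" and A :: "real set"
  assumes k0: "0 < k" and k2: "k < 1/2" and sdef: "s = 2 + 2*k"
    and Fint: "integrable lebesgue (\<lambda>x. indicator {0..1} x *\<^sub>R f x)"
    and A: "A \<in> sets borel" and A01: "A \<subseteq> {0..1}"
begin

definition "F = (\<lambda>x. indicator {0..1} x *\<^sub>R f x)"
definition "S1 = {x. 0 < x \<and> x \<le> 1/s \<and> 1 - s*x \<in> A}"
definition "S2 = {x. 1/s < x \<and> x \<le> 1/2 \<and> s*x - 1 \<in> A}"
definition "S3 = {x. 1/2 < x \<and> x < 1 - 1/s \<and> s*(1-x) - 1 \<in> A}"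
definition "S4 = {x. 1 - 1/s \<le> x \<and> x \<le> 1 \<and> 1 - s*(1-x) \<in> A}"
definition "Z = {x::real. x = 0 \<and> 0 \<in> A}"

lemma m3_s2: "s > 2" using k0 sdef by simp
lemma m3_sp: "s > 0" using m3_s2 by simp
lemma m3_s_half: "1/s < 1/2" using m3_s2 by (simp add: field_simps)

lemma S_meas: "S1 \<in> sets lebesgue" "S2 \<in> sets lebesgue" "S3 \<in> sets lebesgue" "S4 \<in> sets lebesgue" "Z \<in> sets lebesgue"
proof -
  have [measurable]: "A \<in> sets borel" by (rule A)
  have "S1 \<in> sets borel" unfolding S1_def by measurable
  thus "S1 \<in> sets lebesgue" by simp
  have "S2 \<in> sets borel" unfolding S2_def by measurable
  thus "S2 \<in> sets lebesgue" by simp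
  have "S3 \<in> sets borel" unfolding S3_def by measurable
  thus "S3 \<in> sets lebesgue" by simp
  have "S4 \<in> sets borel" unfolding S4_def by measurable
  thus "S4 \<in> sets lebesgue" by simp
  have "Z \<in> sets borel" unfolding Z_def by measurable
  thus "Z \<in> sets lebesgue" by simp
qed

lemma P_ind: "indicator {x \<in> {0..1}. \<bar>paired_tent k x\<bar> \<in> A} x *\<^sub>R f x
   = indicator Z x *\<^sub>R F x + indicator S1 x *\<^sub>R F x + indicator S2 x *\<^sub>R F x + indicator S3 x *\<^sub>R F x + indicator S4 x *\<^sub>R F x"
proof -
  note TP = Ttilde_pieces[OF k0 k2 sdef]
  have h1: "1/s < 1/2" "1/2 < 1 - 1/s" "0 < 1/s" using m3_s_half m3_sp by auto
  consider "x < 0" | "x = 0" | "0 < x" "x \<le> 1/s" | "1/s < x" "x \<le> 1/2" | "1/2 < x" "x < 1 - 1/s"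
    | "1 - 1/s \<le> x" "x \<le> 1" | "1 < x" by linarith
  thus ?thesis
  proof cases
    case 1 thus ?thesis using h1 by (auto simp: indicator_def F_def S1_def S2_def S3_def S4_def Z_def)
  next
    case 2 thus ?thesis using h1 TP(1) by (auto simp: indicator_def F_def S1_def S2_def S3_def S4_def Z_def)
  next
    case 3
    have "\<not> (1 - 1/s \<le> x)" "\<not> 1/s < x" "\<not> 1/2 < x" "x \<le> 1" using 3 h1 by linarith+
    thus ?thesis using 3 TP(2)[of x] by (auto simp: indicator_def F_def S1_def S2_def S3_def S4_def Z_def)
  next
    case 4
    have "\<not> (1 - 1/s \<le> x)" "\<not> x \<le> 1/s" "\<not> 1/2 < x" "x \<le> 1" "0 < x" using 4 h1 by linarith+
    thus ?thesis using 4 TP(3)[of x] by (auto simp: indicator_def F_def S1_def S2_def S3_def S4_def Z_def)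
  next
    case 5
    have "\<not> (1 - 1/s \<le> x)" "\<not> x \<le> 1/s" "\<not> x \<le> 1/2" "x \<le> 1" "0 < x" using 5 h1 by linarith+
    thus ?thesis using 5 TP(4)[of x] by (auto simp: indicator_def F_def S1_def S2_def S3_def S4_def Z_def)
  next
    case 6
    have "\<not> x < 1 - 1/s" "\<not> x \<le> 1/s" "\<not> x \<le> 1/2" "0 < x" using 6 h1 by linarith+
    thus ?thesis using 6 TP(5)[of x] by (auto simp: indicator_def F_def S1_def S2_def S3_def S4_def Z_def)
  next
    case 7 thus ?thesis using h1 by (auto simp: indicator_def F_def S1_def S2_def S3_def S4_def Z_def)
  qed
qed


lemma Fint': "integrable lebesgue F" using Fint by (simp add: F_def)

definition "g1 = (\<lambda>y. indicator (A \<inter> {0..<1}) y *\<^sub>R f ((1-y)/s))"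
definition "g2 = (\<lambda>y. indicator (A \<inter> {0<..k}) y *\<^sub>R f ((1+y)/s))"
definition "g3 = (\<lambda>y. indicator (A \<inter> {0<..<k}) y *\<^sub>R f (1 - (1+y)/s))"
definition "g4 = (\<lambda>y. indicator A y *\<^sub>R f (1 - (1-y)/s))"

lemma sk: "(1 + k) / s = 1/2" using sdef k0 by (simp add: field_simps)

lemma scal:
  "0 < X \<longleftrightarrow> 0 < s*X" "0 \<le> X \<longleftrightarrow> 0 \<le> s*X" "X \<le> 1/s \<longleftrightarrow> s*X \<le> 1" "1/s < X \<longleftrightarrow> 1 < s*X"
  "X \<le> 1/2 \<longleftrightarrow> s*X \<le> 1 + k" "1/2 < X \<longleftrightarrow> 1 + k < s*X"
  "X < 1 - 1/s \<longleftrightarrow> s*X < s - 1" "1 - 1/s \<le> X \<longleftrightarrow> s - 1 \<le> s*X" "X \<le> 1 \<longleftrightarrow> s*X \<le> s"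
  "s*(1-X) = s - s*X"
proof -
  have s0: "s > 0" by (rule m3_sp)
  show "0 < X \<longleftrightarrow> 0 < s*X" using s0 by (simp add: zero_less_mult_iff)
  show "0 \<le> X \<longleftrightarrow> 0 \<le> s*X" using s0 by (simp add: zero_le_mult_iff)
  show "X \<le> 1/s \<longleftrightarrow> s*X \<le> 1" using s0 by (simp add: field_simps)
  show "1/s < X \<longleftrightarrow> 1 < s*X" using s0 by (simp add: field_simps)
  have d: "s*X - (1+k) = s*(X - 1/2)" using sdef by (simp add: algebra_simps)
  have "s*X \<le> 1 + k \<longleftrightarrow> s*(X - 1/2) \<le> 0" using d by linarith
  also have "\<dots> \<longleftrightarrow> X - 1/2 \<le> 0" using s0 by (simp add: mult_le_0_iff)
  finally show "X \<le> 1/2 \<longleftrightarrow> s*X \<le> 1 + k" by linarith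
  have "1 + k < s*X \<longleftrightarrow> 0 < s*(X - 1/2)" using d by linarith
  also have "\<dots> \<longleftrightarrow> 0 < X - 1/2" using s0 by (simp add: zero_less_mult_iff)
  finally show "1/2 < X \<longleftrightarrow> 1 + k < s*X" by linarith
  have d2: "s*X - (s - 1) = s*(X - (1 - 1/s))" using s0 by (simp add: algebra_simps)
  have "s*X < s - 1 \<longleftrightarrow> s*(X - (1 - 1/s)) < 0" using d2 by linarith
  also have "\<dots> \<longleftrightarrow> X - (1 - 1/s) < 0" using s0 by (simp add: mult_less_0_iff)
  finally show "X < 1 - 1/s \<longleftrightarrow> s*X < s - 1" by linarith
  have "s - 1 \<le> s*X \<longleftrightarrow> 0 \<le> s*(X - (1 - 1/s))" using d2 by linarith
  also have "\<dots> \<longleftrightarrow> 0 \<le> X - (1 - 1/s)" using s0 by (simp add: zero_le_mult_iff)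
  finally show "1 - 1/s \<le> X \<longleftrightarrow> s - 1 \<le> s*X" by linarith
  show "X \<le> 1 \<longleftrightarrow> s*X \<le> s" using s0 by simp
  show "s*(1-X) = s - s*X" by (simp add: algebra_simps)
qed

lemma piece1: "integrable lebesgue g1" "integral\<^sup>L lebesgue (\<lambda>x. indicator S1 x *\<^sub>R F x) = (1/s) *\<^sub>R integral\<^sup>L lebesgue g1"
proof -
  have c: "-1/s \<noteq> 0" using m3_sp by simp
  have sX: "s * (1/s + (-1/s)*y) = 1 - y" for y using m3_sp by (simp add: field_simps)
  have e: "indicator S1 (1/s + (-1/s)*y) *\<^sub>R F (1/s + (-1/s)*y) = g1 y" for y
    unfolding g1_def
  proof (rule piece_eq[OF _ _ _ F_def])
    show "(1/s + (-1/s)*y \<in> S1) \<longleftrightarrow> y \<in> A \<inter> {0..<1}" for y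
      unfolding S1_def mem_Collect_eq scal[of "1/s + (-1/s)*y"] sX by auto
    show "1/s + (-1/s)*y \<in> {0..1}" if "y \<in> A \<inter> {0..<1}" for y
      using that m3_s2 unfolding atLeastAtMost_iff scal[of "1/s + (-1/s)*y"] sX by auto
    show "1/s + (-1/s)*y = (1-y)/s" for y using m3_sp by (simp add: field_simps)
  qed
  show "integrable lebesgue g1" by (rule piece(1)[OF Fint' S_meas(1) c e])
  show "integral\<^sup>L lebesgue (\<lambda>x. indicator S1 x *\<^sub>R F x) = (1/s) *\<^sub>R integral\<^sup>L lebesgue g1"
    using piece(2)[OF Fint' S_meas(1) c e] m3_sp by simp
qed

lemma piece2: "integrable lebesgue g2" "integral\<^sup>L lebesgue (\<lambda>x. indicator S2 x *\<^sub>R F x) = (1/s) *\<^sub>R integral\<^sup>L lebesgue g2"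
proof -
  have c: "1/s \<noteq> 0" using m3_sp by simp
  have sX: "s * (1/s + (1/s)*y) = 1 + y" for y using m3_sp by (simp add: field_simps)
  have e: "indicator S2 (1/s + (1/s)*y) *\<^sub>R F (1/s + (1/s)*y) = g2 y" for y
    unfolding g2_def
  proof (rule piece_eq[OF _ _ _ F_def])
    show "(1/s + (1/s)*y \<in> S2) \<longleftrightarrow> y \<in> A \<inter> {0<..k}" for y
      unfolding S2_def mem_Collect_eq scal[of "1/s + (1/s)*y"] sX by auto
    show "1/s + (1/s)*y \<in> {0..1}" if "y \<in> A \<inter> {0<..k}" for y
      using that m3_s2 sdef unfolding atLeastAtMost_iff scal[of "1/s + (1/s)*y"] sX by auto
    show "1/s + (1/s)*y = (1+y)/s" for y using m3_sp by (simp add: field_simps)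
  qed
  show "integrable lebesgue g2" by (rule piece(1)[OF Fint' S_meas(2) c e])
  show "integral\<^sup>L lebesgue (\<lambda>x. indicator S2 x *\<^sub>R F x) = (1/s) *\<^sub>R integral\<^sup>L lebesgue g2"
    using piece(2)[OF Fint' S_meas(2) c e] m3_sp by simp
qed

lemma piece3: "integrable lebesgue g3" "integral\<^sup>L lebesgue (\<lambda>x. indicator S3 x *\<^sub>R F x) = (1/s) *\<^sub>R integral\<^sup>L lebesgue g3"
proof -
  have c: "-1/s \<noteq> 0" using m3_sp by simp
  have sX: "s * ((1 - 1/s) + (-1/s)*y) = s - 1 - y" for y using m3_sp by (simp add: field_simps)
  have e: "indicator S3 ((1 - 1/s) + (-1/s)*y) *\<^sub>R F ((1 - 1/s) + (-1/s)*y) = g3 y" for y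
    unfolding g3_def
  proof (rule piece_eq[OF _ _ _ F_def])
    show "((1 - 1/s) + (-1/s)*y \<in> S3) \<longleftrightarrow> y \<in> A \<inter> {0<..<k}" for y
      unfolding S3_def mem_Collect_eq scal[of "(1 - 1/s) + (-1/s)*y"] sX using sdef by auto
    show "(1 - 1/s) + (-1/s)*y \<in> {0..1}" if "y \<in> A \<inter> {0<..<k}" for y
      using that m3_s2 sdef unfolding atLeastAtMost_iff scal[of "(1 - 1/s) + (-1/s)*y"] sX by auto
    show "(1 - 1/s) + (-1/s)*y = 1 - (1+y)/s" for y using m3_sp by (simp add: field_simps)
  qed
  show "integrable lebesgue g3" by (rule piece(1)[OF Fint' S_meas(3) c e])
  show "integral\<^sup>L lebesgue (\<lambda>x. indicator S3 x *\<^sub>R F x) = (1/s) *\<^sub>R integral\<^sup>L lebesgue g3"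
    using piece(2)[OF Fint' S_meas(3) c e] m3_sp by simp
qed

lemma piece4: "integrable lebesgue g4" "integral\<^sup>L lebesgue (\<lambda>x. indicator S4 x *\<^sub>R F x) = (1/s) *\<^sub>R integral\<^sup>L lebesgue g4"
proof -
  have c: "1/s \<noteq> 0" using m3_sp by simp
  have sX: "s * ((1 - 1/s) + (1/s)*y) = s - 1 + y" for y using m3_sp by (simp add: field_simps)
  have e: "indicator S4 ((1 - 1/s) + (1/s)*y) *\<^sub>R F ((1 - 1/s) + (1/s)*y) = g4 y" for y
    unfolding g4_def
  proof (rule piece_eq[OF _ _ _ F_def])
    show "((1 - 1/s) + (1/s)*y \<in> S4) \<longleftrightarrow> y \<in> A" for y
      unfolding S4_def mem_Collect_eq scal[of "(1 - 1/s) + (1/s)*y"] sX using A01 by auto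
    show "(1 - 1/s) + (1/s)*y \<in> {0..1}" if "y \<in> A" for y
      using that A01 m3_s2 unfolding atLeastAtMost_iff scal[of "(1 - 1/s) + (1/s)*y"] sX by auto
    show "(1 - 1/s) + (1/s)*y = 1 - (1-y)/s" for y using m3_sp by (simp add: field_simps)
  qed
  show "integrable lebesgue g4" by (rule piece(1)[OF Fint' S_meas(4) c e])
  show "integral\<^sup>L lebesgue (\<lambda>x. indicator S4 x *\<^sub>R F x) = (1/s) *\<^sub>R integral\<^sup>L lebesgue g4"
    using piece(2)[OF Fint' S_meas(4) c e] m3_sp by simp
qed


lemma fin_null: "{0, 1, k} \<in> null_sets lebesgue"
  by simp

lemma PF_formula:
  shows "integral\<^sup>L (lebesgue_on {x \<in> {0..1}. \<bar>paired_tent k x\<bar> \<in> A}) f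
           = integral\<^sup>L lebesgue (\<lambda>y. indicator A y *\<^sub>R Phi k s f y)"
    and "integrable lebesgue (\<lambda>y. indicator A y *\<^sub>R Phi k s f y)"
proof -
  define P where "P = {x \<in> {0..1}. \<bar>paired_tent k x\<bar> \<in> A}"
  have [measurable]: "A \<in> sets borel" by (rule A)
  have [measurable]: "paired_tent k \<in> borel_measurable borel"
    unfolding paired_tent_def[abs_def] by measurable
  have "P \<in> sets borel" unfolding P_def by measurable
  hence Pm: "P \<in> sets lebesgue" by simp
  have ae: "AE y in lebesgue. (1/s) *\<^sub>R (g1 y + g2 y + g3 y + g4 y) = indicator A y *\<^sub>R Phi k s f y"
    using AE_not_in[OF fin_null]
  proof eventually_elim
    case (elim y)
    show ?case
    proof (cases "y \<in> A")
      case False thus ?thesis by (simp add: g1_def g2_def g3_def g4_def)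
    next
      case True
      hence y: "0 < y" "y < 1" "y \<noteq> k" using elim A01 by force+
      show ?thesis using True y
        by (cases "y \<le> k") (auto simp: g1_def g2_def g3_def g4_def Phi_def algebra_simps)
    qed
  qed
  have int1: "integrable lebesgue (\<lambda>y. (1/s) *\<^sub>R (g1 y + g2 y + g3 y + g4 y))"
    using piece1(1) piece2(1) piece3(1) piece4(1) by auto
  have m1: "(\<lambda>y. (1/s) *\<^sub>R (g1 y + g2 y + g3 y + g4 y)) \<in> borel_measurable lebesgue"
    using int1 by (rule borel_measurable_integrable)
  have m2: "(\<lambda>y. indicator A y *\<^sub>R Phi k s f y) \<in> borel_measurable lebesgue"
    by (rule borel_measurable_AE[OF m1 ae])
  show int2: "integrable lebesgue (\<lambda>y. indicator A y *\<^sub>R Phi k s f y)"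
    by (rule integrable_cong_AE_imp[OF int1 m2 ae])
  have iS: "integrable lebesgue (\<lambda>x. indicator S x *\<^sub>R F x)" if "S \<in> sets lebesgue" for S
    by (rule integrable_mult_indicator[OF that Fint'])
  have Z0: "integral\<^sup>L lebesgue (\<lambda>x. indicator Z x *\<^sub>R F x) = 0"
  proof (rule integral_eq_zero_AE)
    have "{0::real} \<in> null_sets lebesgue" by simp
    hence "AE x in lebesgue. x \<notin> {0::real}" by (rule AE_not_in)
    thus "AE x in lebesgue. indicator Z x *\<^sub>R F x = 0"
      by eventually_elim (auto simp: Z_def indicator_def)
  qed
  have "integral\<^sup>L (lebesgue_on P) f = integral\<^sup>L lebesgue (\<lambda>x. indicator P x *\<^sub>R f x)"
    using Pm by (subst integral_restrict_space) auto
  also have "\<dots> = integral\<^sup>L lebesgue (\<lambda>x. indicator Z x *\<^sub>R F x + indicator S1 x *\<^sub>R F x + indicator S2 x *\<^sub>R F x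
        + indicator S3 x *\<^sub>R F x + indicator S4 x *\<^sub>R F x)"
    unfolding P_def P_ind by simp
  also have "\<dots> = integral\<^sup>L lebesgue (\<lambda>x. indicator Z x *\<^sub>R F x) + integral\<^sup>L lebesgue (\<lambda>x. indicator S1 x *\<^sub>R F x)
      + integral\<^sup>L lebesgue (\<lambda>x. indicator S2 x *\<^sub>R F x) + integral\<^sup>L lebesgue (\<lambda>x. indicator S3 x *\<^sub>R F x)
      + integral\<^sup>L lebesgue (\<lambda>x. indicator S4 x *\<^sub>R F x)"
    using iS[OF S_meas(1)] iS[OF S_meas(2)] iS[OF S_meas(3)] iS[OF S_meas(4)] iS[OF S_meas(5)]
    by (simp add: integral_add)
  also have "\<dots> = (1/s) *\<^sub>R (integral\<^sup>L lebesgue g1 + integral\<^sup>L lebesgue g2 + integral\<^sup>L lebesgue g3 + integral\<^sup>L lebesgue g4)"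
    unfolding Z0 piece1(2) piece2(2) piece3(2) piece4(2) by (simp add: scaleR_add_right)
  also have "\<dots> = integral\<^sup>L lebesgue (\<lambda>y. (1/s) *\<^sub>R (g1 y + g2 y + g3 y + g4 y))"
    using piece1(1) piece2(1) piece3(1) piece4(1) by (simp add: integral_add)
  also have "\<dots> = integral\<^sup>L lebesgue (\<lambda>y. indicator A y *\<^sub>R Phi k s f y)"
    by (rule integral_cong_AE[OF m1 m2 ae])
  finally show "integral\<^sup>L (lebesgue_on {x \<in> {0..1}. \<bar>paired_tent k x\<bar> \<in> A}) f
           = integral\<^sup>L lebesgue (\<lambda>y. indicator A y *\<^sub>R Phi k s f y)" unfolding P_def .
qed

end


lemma int_on01:
  fixes g :: "real \<Rightarrow> complex"
  assumes "S \<subseteq> {0..1}"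
  shows "integral\<^sup>L (lebesgue_on {0..1}) (\<lambda>x. indicator S x *\<^sub>R g x) = integral\<^sup>L lebesgue (\<lambda>x. indicator S x *\<^sub>R g x)"
proof -
  have "integral\<^sup>L (lebesgue_on {0..1}) (\<lambda>x. indicator S x *\<^sub>R g x)
      = integral\<^sup>L lebesgue (\<lambda>x. indicator {0..1} x *\<^sub>R (indicator S x *\<^sub>R g x))"
    by (subst integral_restrict_space) auto
  also have "(\<lambda>x. indicator {0..1} x *\<^sub>R (indicator S x *\<^sub>R g x)) = (\<lambda>x. indicator S x *\<^sub>R g x)"
    using assms by (auto simp: indicator_def fun_eq_iff)
  finally show ?thesis .
qed

lemma AE_eq:
  fixes k s :: real and c :: complex and f :: "real \<Rightarrow> complex"
  assumes k0: "0 < k" and k2: "k < 1/2" and sdef: "s = 2 + 2*k"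
   and Fint: "integrable lebesgue (\<lambda>x. indicator {0..1} x *\<^sub>R f x)"
   and cint: "integrable (lebesgue_on {0..1}) (\<lambda>x. c * f x)"
   and hyp: "\<forall>A\<in>sets borel. A \<subseteq> {0..1} \<longrightarrow> integral\<^sup>L (lebesgue_on A) (\<lambda>x. c * f x)
        = integral\<^sup>L (lebesgue_on {x \<in> {0..1}. \<bar>paired_tent k x\<bar> \<in> A}) f"
  shows "AE y in lebesgue_on {0..1}. c * f y = Phi k s f y"
proof -
  let ?M = "lebesgue_on {0..1::real}"
  have borel_case: "integral\<^sup>L lebesgue (\<lambda>x. indicator S x *\<^sub>R (c * f x)) = integral\<^sup>L lebesgue (\<lambda>x. indicator S x *\<^sub>R Phi k s f x)"
    if S: "S \<in> sets borel" "S \<subseteq> {0..1}" for S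
  proof -
    have Sl: "S \<in> sets lebesgue" using S by simp
    have "integral\<^sup>L lebesgue (\<lambda>x. indicator S x *\<^sub>R (c * f x)) = integral\<^sup>L (lebesgue_on S) (\<lambda>x. c * f x)"
      using Sl by (subst integral_restrict_space) auto
    also have "\<dots> = integral\<^sup>L (lebesgue_on {x \<in> {0..1}. \<bar>paired_tent k x\<bar> \<in> S}) f" using hyp S by blast
    also have "\<dots> = integral\<^sup>L lebesgue (\<lambda>x. indicator S x *\<^sub>R Phi k s f x)"
      by (rule PF_formula(1)[OF k0 k2 sdef Fint S])
    finally show ?thesis .
  qed
  have PhiInt: "integrable ?M (Phi k s f)"
    using PF_formula(2)[OF k0 k2 sdef Fint, of "{0..1}"] by (subst integrable_restrict_space) auto
  have sf: "sigma_finite_measure ?M"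
  proof -
    have "finite_measure ?M" by (rule finite_measure_lebesgue_on) auto
    thus ?thesis by (rule finite_measure.axioms(1))
  qed
  show ?thesis
  proof (rule sigma_finite_measure.density_unique_banach[OF sf cint PhiInt])
    fix A' assume A'M: "A' \<in> sets ?M"
    have A': "A' \<subseteq> {0..1}" "A' \<in> sets lebesgue" using A'M by (auto simp: sets_restrict_space_iff)
    obtain S N N' where SN: "A' = S \<union> N" "N \<subseteq> N'" "N' \<in> null_sets lborel" "S \<in> sets lborel"
      using A'(2) by (rule sets_completionE)
    define S0 where "S0 = S \<inter> {0..1}"
    have S0: "S0 \<in> sets borel" "S0 \<subseteq> {0..1}" using SN(4) by (auto simp: S0_def)
    have S0M: "S0 \<in> sets ?M" using S0 by (auto simp: sets_restrict_space_iff)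
    have N'l: "N' \<in> null_sets lebesgue" using null_sets_completionI[OF SN(3)] .
    have "N' \<inter> {0..1} \<in> null_sets lebesgue"
      by (rule null_sets_subset[OF N'l]) (use N'l in auto)
    hence N'M: "N' \<inter> {0..1} \<in> null_sets ?M" by (auto simp: null_sets_restrict_space)
    have aeM: "AE x in ?M. x \<notin> N' \<inter> {0..1}" by (rule AE_not_in[OF N'M])
    have same: "\<And>g :: real \<Rightarrow> complex. integrable ?M g \<Longrightarrow>
        set_lebesgue_integral ?M A' g = integral\<^sup>L lebesgue (\<lambda>x. indicator S0 x *\<^sub>R g x)"
    proof -
      fix g :: "real \<Rightarrow> complex" assume gi: "integrable ?M g"
      have "set_lebesgue_integral ?M A' g = integral\<^sup>L ?M (\<lambda>x. indicator A' x *\<^sub>R g x)"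
        by (simp add: set_lebesgue_integral_def)
      also have "\<dots> = integral\<^sup>L ?M (\<lambda>x. indicator S0 x *\<^sub>R g x)"
      proof (rule integral_cong_AE)
        show "(\<lambda>x. indicator A' x *\<^sub>R g x) \<in> borel_measurable ?M"
          by (rule borel_measurable_integrable[OF integrable_mult_indicator[OF A'M gi]])
        show "(\<lambda>x. indicator S0 x *\<^sub>R g x) \<in> borel_measurable ?M"
          by (rule borel_measurable_integrable[OF integrable_mult_indicator[OF S0M gi]])
        have "AE x in ?M. x \<in> {0..1}" by (rule AE_I2) auto
        with aeM show "AE x in ?M. indicator A' x *\<^sub>R g x = indicator S0 x *\<^sub>R g x"
        proof eventually_elim
          case (elim x)
          have "x \<in> A' \<longleftrightarrow> x \<in> S0" using elim SN(1,2) A'(1) by (auto simp: S0_def)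
          thus ?case by (simp add: indicator_def)
        qed
      qed
      also have "\<dots> = integral\<^sup>L lebesgue (\<lambda>x. indicator S0 x *\<^sub>R g x)" by (rule int_on01[OF S0(2)])
      finally show "set_lebesgue_integral ?M A' g = integral\<^sup>L lebesgue (\<lambda>x. indicator S0 x *\<^sub>R g x)" .
    qed
    show "set_lebesgue_integral ?M A' (\<lambda>x. c * f x) = set_lebesgue_integral ?M A' (Phi k s f)"
      unfolding same[OF cint] same[OF PhiInt] using borel_case[OF S0] by simp
  qed
qed


fun Zs :: "real \<Rightarrow> real set \<Rightarrow> nat \<Rightarrow> real set" where
  "Zs s N0 0 = N0"
| "Zs s N0 (Suc j) = (\<lambda>x. 0 + s*x) ` Zs s N0 j \<union> (\<lambda>x. 1 + (-s)*x) ` Zs s N0 j \<union> (\<lambda>x. -1 + s*x) ` Zs s N0 j"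

lemma Zs_null: "N0 \<in> null_sets lebesgue \<Longrightarrow> s \<noteq> 0 \<Longrightarrow> Zs s N0 j \<in> null_sets lebesgue"
proof (induction j)
  case 0 thus ?case by simp
next
  case (Suc j)
  have a: "(\<lambda>x. 0 + s*x) ` Zs s N0 j \<in> null_sets lebesgue" by (rule null_affine_image[OF Suc.IH[OF Suc.prems]]) (use Suc.prems in auto)
  have b: "(\<lambda>x. 1 + (-s)*x) ` Zs s N0 j \<in> null_sets lebesgue" by (rule null_affine_image[OF Suc.IH[OF Suc.prems]]) (use Suc.prems in auto)
  have c: "(\<lambda>x. -1 + s*x) ` Zs s N0 j \<in> null_sets lebesgue" by (rule null_affine_image[OF Suc.IH[OF Suc.prems]]) (use Suc.prems in auto)
  have "Zs s N0 (Suc j) = (\<lambda>x. 0 + s*x) ` Zs s N0 j \<union> (\<lambda>x. 1 + (-s)*x) ` Zs s N0 j \<union> (\<lambda>x. -1 + s*x) ` Zs s N0 j"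
    by (simp only: Zs.simps)
  thus ?case using a b c by (metis null_sets.Un)
qed

lemma Zs_step:
  "y \<in> Zs s N0 j \<Longrightarrow> 0 + s*y \<in> Zs s N0 (Suc j)"
  "y \<in> Zs s N0 j \<Longrightarrow> 1 + (-s)*y \<in> Zs s N0 (Suc j)"
  "y \<in> Zs s N0 j \<Longrightarrow> -1 + s*y \<in> Zs s N0 (Suc j)"
  unfolding Zs.simps by blast+

lemma Mset_finite: "finite (Mset s k n)"
proof -
  have "{k * s^j | j. j \<le> n - 2} = (\<lambda>j. k * s^j) ` {..n-2}" by auto
  thus ?thesis unfolding Mset_def by simp
qed

lemma main_eig:
  fixes n :: nat and c :: complex and f :: "real \<Rightarrow> complex"
  assumes n6: "n \<ge> 6" and bv: "bv01 f" and nz: "\<not> (AE x in lebesgue_on {0..1}. f x = 0)"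
    and pf: "PF_image (Ttilde n) f (\<lambda>x. c * f x)"
    and big: "cmod c > (1 + 1 / real n) / (2 + 2 * kappa n)"
  shows "c = 1"
proof -
  define k where "k = kappa n"
  define s where "s = 2 + 2 * k"
  have kp: "0 < k" "k < 1/2" "(2 + 2 * k) ^ n * k = 1" using kappa_props[of n] n6 by (auto simp: k_def)
  have sdef: "s = 2 + 2*k" by (simp add: s_def)
  have sk: "s^n * k = 1" using kp by (simp add: s_def)
  have s2: "s > 2" using kp by (simp add: s_def)
  have sp: "s > 0" using s2 by simp
  have big': "cmod c > (1 + 1 / real n) / s" using big by (simp add: s_def k_def)
  have "1 + 1 / real n > 0" by (simp add: add_pos_nonneg)
  hence rpos: "(1 + 1 / real n) / s > 0" using sp by simp
  have c0: "c \<noteq> 0" using big' rpos by auto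
  define z where "z = complex_of_real s * c"
  have zc: "cmod z = s * cmod c" using sp by (simp add: z_def norm_mult)
  have zr: "cmod z > 1 + 1 / real n"
  proof -
    have "s * cmod c > s * ((1 + 1 / real n) / s)" using big' sp by (intro mult_strict_left_mono) auto
    thus ?thesis using zc sp by simp
  qed
  have z1: "cmod z > 1" using zr by (smt (verit) of_nat_0_le_iff divide_nonneg_nonneg)
  have cint: "integrable (lebesgue_on {0..1}) (\<lambda>x. c * f x)" using pf by (simp add: PF_image_def)
  have hyp: "\<forall>A\<in>sets borel. A \<subseteq> {0..1} \<longrightarrow> integral\<^sup>L (lebesgue_on A) (\<lambda>x. c * f x)
        = integral\<^sup>L (lebesgue_on {x \<in> {0..1}. \<bar>paired_tent k x\<bar> \<in> A}) f"
    using pf by (simp add: PF_image_def Ttilde_def k_def)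
  have fint: "integrable (lebesgue_on {0..1}) f"
  proof -
    have "integrable (lebesgue_on {0..1}) (\<lambda>x. inverse c * (c * f x))" using cint by (rule integrable_mult_right)
    thus ?thesis using c0 by (simp add: field_simps)
  qed
  have Fint: "integrable lebesgue (\<lambda>x. indicator {0..1} x *\<^sub>R f x)"
    using fint by (subst (asm) integrable_restrict_space) auto
  have ae: "AE y in lebesgue_on {0..1}. c * f y = Phi k s f y"
    by (rule AE_eq[OF kp(1,2) sdef Fint cint hyp])
  hence "AE y in lebesgue. y \<in> {0..1} \<longrightarrow> c * f y = Phi k s f y"
    by (subst (asm) AE_restrict_space_iff) auto
  then obtain N where N1: "\<And>x. x \<in> space lebesgue - N \<Longrightarrow> (x \<in> {0..1} \<longrightarrow> c * f x = Phi k s f x)"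
    and N2: "N \<in> null_sets lebesgue" by (elim AE_E3) blast
  have N: "N \<in> null_sets lebesgue" "\<And>y. y \<notin> N \<Longrightarrow> y \<in> {0..1} \<Longrightarrow> c * f y = Phi k s f y"
    using N2 N1 by auto
  define h where "h x = f x + f (1 - x)" for x
  have sPhi: "complex_of_real s * Phi k s f y = h ((1-y)/s) + (if y \<le> k then h ((1+y)/s) else 0)" for y
  proof -
    have "complex_of_real s * Phi k s f y = complex_of_real s * ((1/s) *\<^sub>R (f ((1-y)/s) + f (1 - (1-y)/s) + (if y \<le> k then f ((1+y)/s) + f (1 - (1+y)/s) else 0)))"
      by (simp add: Phi_def)
    also have "\<dots> = f ((1-y)/s) + f (1 - (1-y)/s) + (if y \<le> k then f ((1+y)/s) + f (1 - (1+y)/s) else 0)"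
      using sp by (simp add: scaleR_conv_of_real)
    finally show ?thesis by (simp add: h_def)
  qed
  define N0 where "N0 = N \<union> (\<lambda>x. 1 + (-1)*x) ` N"
  have N0null: "N0 \<in> null_sets lebesgue" unfolding N0_def using N(1) null_affine_image[OF N(1), of "-1" 1] by auto
  define ZU where "ZU = (\<Union>j. Zs s N0 j)"
  have ZUnull: "ZU \<in> null_sets lebesgue" unfolding ZU_def using Zs_null[OF N0null] sp by (intro null_sets_UN) auto
  define G where "G = {0..1/2} - ZU"
  have inZU: "x \<in> ZU \<longleftrightarrow> (\<exists>j. x \<in> Zs s N0 j)" for x by (simp add: ZU_def)
  have G1: "x / s \<in> G" if "x \<in> G" for x
  proof -
    have "x/s \<in> {0..1/2}" using that sp s2 by (auto simp: G_def divide_simps)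
    moreover have "x/s \<notin> ZU"
    proof
      assume "x/s \<in> ZU"
      then obtain j where "x/s \<in> Zs s N0 j" using inZU by auto
      hence "0 + s*(x/s) \<in> Zs s N0 (Suc j)" by (rule Zs_step)
      moreover have "0 + s*(x/s) = x" using sp by simp
      ultimately have "x \<in> ZU" using inZU by metis
      thus False using that by (simp add: G_def)
    qed
    ultimately show ?thesis by (simp add: G_def)
  qed
  have G2: "(1 - x) / s \<in> G" if "x \<in> G" "0 < x" "x < 1/2" for x
  proof -
    have "(1-x)/s \<in> {0..1/2}" using that sp s2 by (auto simp: divide_simps)
    moreover have "(1-x)/s \<notin> ZU"
    proof
      assume "(1-x)/s \<in> ZU"
      then obtain j where "(1-x)/s \<in> Zs s N0 j" using inZU by auto
      hence "1 + (-s)*((1-x)/s) \<in> Zs s N0 (Suc j)" by (rule Zs_step)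
      moreover have "1 + (-s)*((1-x)/s) = x" using sp by simp
      ultimately have "x \<in> ZU" using inZU by metis
      thus False using that by (simp add: G_def)
    qed
    ultimately show ?thesis by (simp add: G_def)
  qed
  have G3: "(1 + x) / s \<in> G" if "x \<in> G" "0 < x" "x < k" for x
  proof -
    have "(1+x)/s \<le> 1/2" using that sdef sp by (simp add: divide_simps)
    hence "(1+x)/s \<in> {0..1/2}" using that sp by auto
    moreover have "(1+x)/s \<notin> ZU"
    proof
      assume "(1+x)/s \<in> ZU"
      then obtain j where "(1+x)/s \<in> Zs s N0 j" using inZU by auto
      hence "-1 + s*((1+x)/s) \<in> Zs s N0 (Suc j)" by (rule Zs_step)
      moreover have "-1 + s*((1+x)/s) = x" using sp by simp
      ultimately have "x \<in> ZU" using inZU by metis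
      thus False using that by (simp add: G_def)
    qed
    ultimately show ?thesis by (simp add: G_def)
  qed
  have eqn: "z * h x = h (x / s) + h ((1 - x) / s) + (if x \<le> k then h ((1 + x) / s) else 0)"
    if "x \<in> G" "0 < x" "x < 1/2" for x
  proof -
    have "x \<notin> ZU" using that by (simp add: G_def)
    hence xZ: "x \<notin> Zs s N0 0" using inZU by blast
    have xN: "x \<notin> N" using xZ by (simp add: N0_def)
    have x1N: "1 - x \<notin> N"
    proof
      assume "1 - x \<in> N"
      hence "1 + (-1)*(1-x) \<in> (\<lambda>x. 1 + (-1)*x) ` N" by blast
      thus False using xZ by (simp add: N0_def)
    qed
    have e1: "c * f x = Phi k s f x" using N(2)[OF xN] that by simp
    have e2: "c * f (1-x) = Phi k s f (1-x)" using N(2)[OF x1N] that by simp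
    have "z * h x = complex_of_real s * (c * f x) + complex_of_real s * (c * f (1-x))"
      by (simp add: z_def h_def algebra_simps)
    also have "\<dots> = complex_of_real s * Phi k s f x + complex_of_real s * Phi k s f (1-x)" using e1 e2 by simp
    also have "\<dots> = h ((1-x)/s) + (if x \<le> k then h ((1+x)/s) else 0) + h (x/s)"
      unfolding sPhi using that kp by simp
    finally show ?thesis by (simp add: algebra_simps)
  qed
  obtain B where B: "\<forall>(m::nat) (x::nat \<Rightarrow> real). 0 \<le> x 0 \<and> x m \<le> 1 \<and> (\<forall>i<m. x i \<le> x (Suc i)) \<longrightarrow>
      (\<Sum>i<m. cmod (f (x (Suc i)) - f (x i))) \<le> B" using bv by (auto simp: bv01_def)
  have Vb: "pairsum h L \<le> 2 * B" if "sorted (flat L)" "set (flat L) \<subseteq> {0<..<1/2}" for L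
    unfolding h_def by (rule pairsum_h[OF B that])
  have Gd: "\<exists>x\<in>G. a < x \<and> x < b" if "0 \<le> a" "a < b" "b \<le> 1/2" for a b
  proof (rule ccontr)
    assume "\<not> (\<exists>x\<in>G. a < x \<and> x < b)"
    hence sub: "{a<..<b} \<subseteq> ZU" using that by (auto simp: G_def)
    have "{a<..<b} \<in> null_sets lebesgue" by (rule null_sets_subset[OF ZUnull _ sub]) simp
    hence "emeasure lebesgue {a<..<b} = 0" by auto
    moreover have "emeasure lebesgue {a<..<b} = ennreal (b - a)" using that by simp
    ultimately show False using that by simp
  qed
  have md: "z^n * (z - 2) = 2 \<or> (\<forall>x\<in>G. 0 < x \<and> x < 1/2 \<and> x \<notin> Mset s k n \<longrightarrow> h x = 0)"
    by (rule main_dichotomy[OF n6 kp(1,2) sdef sk z1 G1 G2 G3 eqn Vb Gd])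
  show ?thesis
  proof (cases "z^n * (z - 2) = 2")
    case True
    have ps: "s^n * (s - 2) = 2" using sk sdef by (simp add: algebra_simps)
    have "z = complex_of_real s" by (rule root_lemma[OF n6 s2 ps True zr])
    thus ?thesis using sp by (simp add: z_def)
  next
    case False
    hence hz: "\<forall>x\<in>G. 0 < x \<and> x < 1/2 \<and> x \<notin> Mset s k n \<longrightarrow> h x = 0" using md by simp
    define W where "W = ZU \<union> Mset s k n"
    have Mnull: "Mset s k n \<in> null_sets lebesgue"
      using finite_imp_null_set_lborel[OF Mset_finite] by (rule null_sets_completionI)
    have Wnull: "W \<in> null_sets lebesgue" unfolding W_def using ZUnull Mnull by auto
    define Y where "Y = N \<union> {0, 1, k} \<union> (\<lambda>x. 1 + (-s)*x) ` W \<union> (\<lambda>x. -1 + s*x) ` W"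
    have Ynull: "Y \<in> null_sets lebesgue" unfolding Y_def
      using N(1) Wnull null_affine_image[OF Wnull, of "-s" 1] null_affine_image[OF Wnull, of s "-1"] sp
      by auto
    have "AE y in lebesgue. y \<in> {0..1} \<longrightarrow> f y = 0"
      using AE_not_in[OF Ynull]
    proof eventually_elim
      case (elim y)
      show ?case
      proof
        assume y01: "y \<in> {0..1}"
        have yN: "y \<notin> N" "y \<noteq> 0" "y \<noteq> 1" "y \<noteq> k" using elim by (auto simp: Y_def)
        have y: "0 < y" "y < 1" using y01 yN by auto
        have h1: "h ((1-y)/s) = 0"
        proof -
          have r: "0 < (1-y)/s" "(1-y)/s < 1/2" using y sp s2 by (auto simp: divide_simps)
          have "(1-y)/s \<notin> W"
          proof
            assume "(1-y)/s \<in> W"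
            hence "1 + (-s)*((1-y)/s) \<in> (\<lambda>x. 1 + (-s)*x) ` W" by blast
            thus False using elim sp by (simp add: Y_def)
          qed
          thus ?thesis using hz r by (auto simp: G_def W_def)
        qed
        have h2: "(if y \<le> k then h ((1+y)/s) else 0) = 0"
        proof (cases "y \<le> k")
          case True
          have r: "0 < (1+y)/s" "(1+y)/s < 1/2" using y sp s2 True yN(4) sdef by (auto simp: divide_simps)
          have "(1+y)/s \<notin> W"
          proof
            assume "(1+y)/s \<in> W"
            hence "-1 + s*((1+y)/s) \<in> (\<lambda>x. -1 + s*x) ` W" by blast
            thus False using elim sp by (simp add: Y_def)
          qed
          thus ?thesis using hz r True by (auto simp: G_def W_def)
        qed simp
        have "complex_of_real s * (c * f y) = 0" using N(2)[OF yN(1) y01] sPhi[of y] h1 h2 by simp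
        thus "f y = 0" using c0 sp by simp
      qed
    qed
    hence "AE y in lebesgue_on {0..1}. f y = 0" by (subst AE_restrict_space_iff) auto
    thus ?thesis using nz by simp
  qed
qed


theorem corollary17:
  shows "(\<forall>n::nat. n \<ge> 6 \<longrightarrow>
            (\<forall>c. second_largest_eigenvalue (PF_eigenvalues (Ttilde n)) c \<longrightarrow>
               cmod c \<le> (1 + 1 / real n) / (2 + 2 * kappa n)))
       \<and> (\<lambda>n. (1 + 1 / real n) / (2 + 2 * kappa n) - (1/2) * (1 + 1 / real n))
            \<in> o(\<lambda>n. 1 / real n)"
proof (intro conjI allI impI)
  show "(\<lambda>n. (1 + 1 / real n) / (2 + 2 * kappa n) - (1/2) * (1 + 1 / real n)) \<in> o(\<lambda>n. 1 / real n)"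
    by (rule asymp_part)
next
  fix n :: nat and c :: complex
  assume n6: "n \<ge> 6" and sl: "second_largest_eigenvalue (PF_eigenvalues (Ttilde n)) c"
  define E where "E = PF_eigenvalues (Ttilde n)"
  define b where "b = (1 + 1 / real n) / (2 + 2 * kappa n)"
  have cE: "c \<in> E" and clt: "cmod c < Sup (cmod ` E)" using sl by (auto simp: second_largest_eigenvalue_def E_def Let_def)
  have kp: "0 < kappa n" using kappa_props[of n] n6 by auto
  have b1: "b < 1"
  proof -
    have "1 + 1 / real n \<le> 2" using n6 by (simp add: field_simps)
    moreover have "2 + 2 * kappa n > 2" using kp by simp
    ultimately show ?thesis unfolding b_def by (simp add: divide_simps)
  qed
  have eig: "\<mu> = 1 \<or> cmod \<mu> \<le> b" if \<mu>E: "\<mu> \<in> E" for \<mu>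
  proof (rule ccontr)
    assume "\<not> (\<mu> = 1 \<or> cmod \<mu> \<le> b)"
    hence ne: "\<mu> \<noteq> 1" and gt: "cmod \<mu> > b" by auto
    obtain f where f: "bv01 f" "\<not> (AE x in lebesgue_on {0..1}. f x = 0)" "PF_image (Ttilde n) f (\<lambda>x. \<mu> * f x)"
      using \<mu>E by (auto simp: E_def PF_eigenvalues_def)
    have "\<mu> = 1" by (rule main_eig[OF n6 f]) (use gt in \<open>simp add: b_def\<close>)
    thus False using ne by simp
  qed
  show "cmod c \<le> (1 + 1 / real n) / (2 + 2 * kappa n)"
  proof (rule ccontr)
    assume "\<not> cmod c \<le> (1 + 1 / real n) / (2 + 2 * kappa n)"
    hence "cmod c > b" by (simp add: b_def)
    hence c1: "c = 1" using eig[OF cE] by auto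
    have "Sup (cmod ` E) \<le> 1"
    proof (rule cSup_least)
      show "cmod ` E \<noteq> {}" using cE by auto
      fix x assume "x \<in> cmod ` E"
      then obtain \<mu> where "\<mu> \<in> E" "x = cmod \<mu>" by auto
      thus "x \<le> 1" using eig[of \<mu>] b1 by auto
    qed
    thus False using clt c1 by simp
  qed
qed


end
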